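(* Let $K=\mathbb{Q}(\sqrt{d})$, where $d>1$ is square-free and $d=m^2+r$ with $m,r$ integers, $m>0$, $-m<r\le m$ and $4m\equiv 0 \pmod r$ (i.e. $K$ is of Richaud–Degert type). Suppose that either $d\equiv 2,3 \pmod 4$, or $d\equiv 1\pmod 4$ and $m$ is odd. If $K$ is not unit reducible, then $n_K=2$.
   Context: For a totally real number field $K$ with ring of integers $\mathcal{O}_K$ and unit group $\mathcal{O}_K^\times$, let $K_{>>0}$ be the set of totally positive elements. For $a\in K_{>>0}$, $\mu(a)=\min_{x\in\mathcal{O}_K\setminus\{0\}}\mathrm{Tr}_{K/\mathbb{Q}}(ax^2)$ and $\mathcal{M}(a)=\{x\in\mathcal{O}_K:\mathrm{Tr}_{K/\mathbb{Q}}(ax^2)=\mu(a)\}$. $K$ is unit reducible if $\mu(a)=\min_{u\in\mathcal{O}_K^\times}\mathrm{Tr}_{K/\mathbb{Q}}(au^2)$ for all $a\in K_{>>0}$. The unary form $ax^2$ is perfect if $a$ is the only $b\in K_{>>0}$ with $\mathrm{Tr}_{K/\mathbb{Q}}(bv^2)=\mu(a)$ for all $v\in\mathcal{M}(a)$. Forms $ax^2,bx^2$ are equivalent if $b=au^2$ for some $u\in\mathcal{O}_K^\times$, homothetic if $b=\lambda a$ with rational $\lambda>0$; $n_K$ is the number of classes of perfect unary forms up to equivalence and homothety. *)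

theory Defs
  imports Complex_Main "HOL-Computational_Algebra.Squarefree"
begin

text \<open>Elements of K = Q(sqrt d) are represented as pairs (a,b) of rationals,
  standing for a + b sqrt d.\<close>

type_synonym qelt = "rat \<times> rat"

definition qmul :: "int \<Rightarrow> qelt \<Rightarrow> qelt \<Rightarrow> qelt" where
  "qmul d x y = (fst x * fst y + of_int d * snd x * snd y, fst x * snd y + snd x * fst y)"

definition qscale :: "rat \<Rightarrow> qelt \<Rightarrow> qelt" where
  "qscale l x = (l * fst x, l * snd x)"

definition qtr :: "qelt \<Rightarrow> rat" where
  "qtr x = 2 * fst x"

definition qnorm :: "int \<Rightarrow> qelt \<Rightarrow> rat" where
  "qnorm d x = (fst x)^2 - of_int d * (snd x)^2"

definition emb1 :: "int \<Rightarrow> qelt \<Rightarrow> real" where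
  "emb1 d x = real_of_rat (fst x) + real_of_rat (snd x) * sqrt (real_of_int d)"

definition emb2 :: "int \<Rightarrow> qelt \<Rightarrow> real" where
  "emb2 d x = real_of_rat (fst x) - real_of_rat (snd x) * sqrt (real_of_int d)"

definition totpos :: "int \<Rightarrow> qelt \<Rightarrow> bool" where
  "totpos d x \<longleftrightarrow> emb1 d x > 0 \<and> emb2 d x > 0"

text \<open>Ring of integers: elements whose characteristic polynomial
  X^2 - Tr(x) X + N(x) has integer coefficients.\<close>
definition OK :: "int \<Rightarrow> qelt set" where
  "OK d = {x. qtr x \<in> \<int> \<and> qnorm d x \<in> \<int>}"

definition qunits :: "int \<Rightarrow> qelt set" where
  "qunits d = {u \<in> OK d. \<exists>v \<in> OK d. qmul d u v = (1, 0)}"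

definition tf :: "int \<Rightarrow> qelt \<Rightarrow> qelt \<Rightarrow> rat" where
  "tf d a x = qtr (qmul d a (qmul d x x))"

definition mu :: "int \<Rightarrow> qelt \<Rightarrow> real" where
  "mu d a = Inf ((\<lambda>x. real_of_rat (tf d a x)) ` (OK d - {(0, 0)}))"

definition minvecs :: "int \<Rightarrow> qelt \<Rightarrow> qelt set" where
  "minvecs d a = {x \<in> OK d. real_of_rat (tf d a x) = mu d a}"

definition unit_reducible :: "int \<Rightarrow> bool" where
  "unit_reducible d \<longleftrightarrow> (\<forall>a. totpos d a \<longrightarrow>
      mu d a = Inf ((\<lambda>u. real_of_rat (tf d a u)) ` qunits d))"

definition perfect :: "int \<Rightarrow> qelt \<Rightarrow> bool" where
  "perfect d a \<longleftrightarrow> totpos d a \<and>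
     (\<forall>b. totpos d b \<and> (\<forall>v \<in> minvecs d a. real_of_rat (tf d b v) = mu d a) \<longrightarrow> b = a)"

definition form_rel :: "int \<Rightarrow> qelt \<Rightarrow> qelt \<Rightarrow> bool" where
  "form_rel d a b \<longleftrightarrow> (\<exists>u \<in> qunits d. \<exists>l::rat. l > 0 \<and> b = qscale l (qmul d a (qmul d u u)))"

definition nK :: "int \<Rightarrow> nat" where
  "nK d = card ({a. perfect d a} // {(a, b). perfect d a \<and> perfect d b \<and> form_rel d a b})"

end

theory Submission
  imports Defs
begin


lemma sqfree_int_sq:
  fixes d :: int and y :: rat
  assumes sf: "squarefree d" and h: "of_int d * y^2 \<in> \<int>"
  shows "y \<in> \<int>"
proof -
  obtain a b where q: "quotient_of y = (a, b)" by (cases "quotient_of y") auto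
  have b0: "b > 0" using q quotient_of_denom_pos by blast
  have cop: "coprime a b" using q quotient_of_coprime by blast
  have y: "y = of_int a / of_int b" using q quotient_of_div by blast
  obtain k where k: "of_int d * y^2 = of_int k" using h Ints_cases by metis
  have "of_int d * (of_int a)^2 = (of_int k * (of_int b)^2 :: rat)"
    using k b0 unfolding y by (simp add: field_simps power2_eq_square)
  hence e: "d * a^2 = k * b^2" by (metis of_int_eq_iff of_int_mult of_int_power)
  have "b^2 dvd d * a^2" using e by simp
  moreover have "coprime (b^2) (a^2)" using cop by (simp add: coprime_commute)
  ultimately have "b^2 dvd d" using coprime_dvd_mult_left_iff by blast
  hence "is_unit b" using sf unfolding squarefree_def by blast
  hence "b = 1" using b0 by (simp add: zdvd1_eq)
  thus ?thesis using y by simp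
qed

locale qf =
  fixes d :: int
  assumes d1: "d > 1" and sf: "squarefree d"
begin

abbreviation "sd \<equiv> sqrt (real_of_int d)"

lemma sd_sq: "sd * sd = real_of_int d" using d1 by simp
lemma sd_pos: "sd > 0" using d1 by simp

lemma sd_irr: "sd \<notin> \<rat>"
proof
  assume "sd \<in> \<rat>"
  then obtain z where z: "sd = real_of_rat z" by (auto elim: Rats_cases)
  have "real_of_rat (z*z) = real_of_int d" using sd_sq z by (simp add: of_rat_mult)
  hence zz: "z * z = of_int d" by (metis of_rat_eq_iff of_rat_of_int_eq)
  have "of_int d * (z / of_int d)^2 = (1::rat)" using d1 zz
    by (simp add: field_simps power2_eq_square)
  hence "z / of_int d \<in> \<int>" using sqfree_int_sq[OF sf] by simp
  then obtain k where k: "z / of_int d = of_int k" by (auto elim: Ints_cases)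
  hence "z = of_int (d*k)" using d1 by (simp add: field_simps)
  hence "of_int (d*k*(d*k)) = (of_int d :: rat)" using zz by simp
  hence e: "d*k*(d*k) = d" by (metis of_int_eq_iff)
  hence "d * (d*k*k) = d * 1" by (simp add: algebra_simps)
  hence "d*k*k = 1" using d1 by (simp)
  hence "d dvd 1" by (metis dvd_triv_left mult.assoc)
  thus False using d1 by (simp add: zdvd1_eq)
qed

lemma lin_zero: fixes a b :: rat assumes "real_of_rat a + real_of_rat b * sd = 0" shows "a = 0 \<and> b = 0"
proof (cases "b = 0")
  case True thus ?thesis using assms by simp
next
  case False
  hence "sd = real_of_rat (-a/b)" using assms by (simp add: of_rat_divide of_rat_minus field_simps)
  hence "sd \<in> \<rat>" by simp
  thus ?thesis using sd_irr by simp
qed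

end


definition qadd :: "qelt \<Rightarrow> qelt \<Rightarrow> qelt" where
  "qadd x y = (fst x + fst y, snd x + snd y)"
definition qconj :: "qelt \<Rightarrow> qelt" where
  "qconj x = (fst x, - snd x)"
definition qneg :: "qelt \<Rightarrow> qelt" where
  "qneg x = (- fst x, - snd x)"

context qf begin

abbreviation "e1 \<equiv> emb1 d"
abbreviation "e2 \<equiv> emb2 d"

lemma mul_aux: fixes s D a b c e :: real assumes "s*s = D"
  shows "(a+b*s)*(c+e*s) = (a*c+D*b*e) + (a*e+b*c)*s"
    and "(a-b*s)*(c-e*s) = (a*c+D*b*e) - (a*e+b*c)*s"
proof -
  have "(a+b*s)*(c+e*s) = a*c+(s*s)*b*e + (a*e+b*c)*s" by algebra
  thus "(a+b*s)*(c+e*s) = (a*c+D*b*e) + (a*e+b*c)*s" using assms by simp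
  have "(a-b*s)*(c-e*s) = a*c+(s*s)*b*e - (a*e+b*c)*s" by algebra
  thus "(a-b*s)*(c-e*s) = (a*c+D*b*e) - (a*e+b*c)*s" using assms by simp
qed

lemma e1_mul[simp]: "e1 (qmul d x y) = e1 x * e1 y"
  unfolding emb1_def qmul_def
  by (simp add: of_rat_add of_rat_mult mul_aux(1)[OF sd_sq])
lemma e2_mul[simp]: "e2 (qmul d x y) = e2 x * e2 y"
  unfolding emb2_def qmul_def
  by (simp add: of_rat_add of_rat_mult mul_aux(2)[OF sd_sq])
lemma e1_add[simp]: "e1 (qadd x y) = e1 x + e1 y"
  unfolding emb1_def qadd_def by (simp add: of_rat_add algebra_simps)
lemma e2_add[simp]: "e2 (qadd x y) = e2 x + e2 y"
  unfolding emb2_def qadd_def by (simp add: of_rat_add algebra_simps)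
lemma e1_scale[simp]: "e1 (qscale l x) = real_of_rat l * e1 x"
  unfolding emb1_def qscale_def by (simp add: of_rat_mult algebra_simps)
lemma e2_scale[simp]: "e2 (qscale l x) = real_of_rat l * e2 x"
  unfolding emb2_def qscale_def by (simp add: of_rat_mult algebra_simps)
lemma e1_conj[simp]: "e1 (qconj x) = e2 x"
  unfolding emb1_def emb2_def qconj_def by (simp add: of_rat_minus)
lemma e2_conj[simp]: "e2 (qconj x) = e1 x"
  unfolding emb1_def emb2_def qconj_def by (simp add: of_rat_minus)
lemma e1_neg[simp]: "e1 (qneg x) = - e1 x"
  unfolding emb1_def qneg_def by (simp add: of_rat_minus)
lemma e2_neg[simp]: "e2 (qneg x) = - e2 x"
  unfolding emb2_def qneg_def by (simp add: of_rat_minus)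
lemma e1_one[simp]: "e1 (1,0) = 1" unfolding emb1_def by simp
lemma e2_one[simp]: "e2 (1,0) = 1" unfolding emb2_def by simp
lemma e1_zero[simp]: "e1 (0,0) = 0" unfolding emb1_def by simp
lemma e2_zero[simp]: "e2 (0,0) = 0" unfolding emb2_def by simp

lemma e1_inj: "e1 x = e1 y \<Longrightarrow> x = y"
proof -
  assume "e1 x = e1 y"
  hence "real_of_rat (fst x - fst y) + real_of_rat (snd x - snd y) * sd = 0"
    unfolding emb1_def by (simp add: of_rat_diff algebra_simps)
  from lin_zero[OF this] show "x = y" by (simp add: prod_eq_iff)
qed
lemma e2_inj: "e2 x = e2 y \<Longrightarrow> x = y"
proof -
  assume "e2 x = e2 y"
  hence "real_of_rat (fst x - fst y) + real_of_rat (snd y - snd x) * sd = 0"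
    unfolding emb2_def by (simp add: of_rat_diff algebra_simps)
  from lin_zero[OF this] show "x = y" by (simp add: prod_eq_iff)
qed
lemma e1_eq_iff: "x = y \<longleftrightarrow> e1 x = e1 y" by (metis e1_inj)
lemma e1_nz: "x \<noteq> (0,0) \<Longrightarrow> e1 x \<noteq> 0" using e1_inj[of x "(0,0)"] by auto
lemma e2_nz: "x \<noteq> (0,0) \<Longrightarrow> e2 x \<noteq> 0" using e2_inj[of x "(0,0)"] by auto

lemma tr_real: "real_of_rat (qtr x) = e1 x + e2 x"
  unfolding qtr_def emb1_def emb2_def by (simp add: of_rat_mult)
lemma norm_real: "real_of_rat (qnorm d x) = e1 x * e2 x"
proof -
  have "(real_of_rat (fst x) + real_of_rat (snd x) * sd) * (real_of_rat (fst x) - real_of_rat (snd x) * sd)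
     = real_of_rat (fst x) ^2 - (sd*sd) * real_of_rat (snd x)^2" by algebra
  thus ?thesis unfolding qnorm_def emb1_def emb2_def using sd_sq
    by (simp add: of_rat_diff of_rat_mult of_rat_power)
qed

lemma tf_real: "real_of_rat (tf d a x) = e1 a * (e1 x)^2 + e2 a * (e2 x)^2"
  unfolding tf_def by (simp add: tr_real power2_eq_square)

lemma totpos_iff: "totpos d a \<longleftrightarrow> e1 a > 0 \<and> e2 a > 0" unfolding totpos_def by simp

end


context qf begin

lemma OK_int:
  assumes "x \<in> OK d"
  obtains X Y :: int where "fst x = of_int X / 2" "snd x = of_int Y / 2" "4 dvd (X^2 - d*Y^2)"
proof -
  from assms have t: "2 * fst x \<in> \<int>" and n: "qnorm d x \<in> \<int>" unfolding OK_def qtr_def by auto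
  obtain X where X: "2 * fst x = of_int X" using t by (auto elim: Ints_cases)
  obtain n where nn: "qnorm d x = of_int n" using n by (auto elim: Ints_cases)
  have "of_int d * (2 * snd x)^2 = (2 * fst x)^2 - 4 * qnorm d x"
    unfolding qnorm_def by (simp add: power2_eq_square algebra_simps)
  also have "\<dots> = of_int (X^2 - 4*n)" using X nn by simp
  finally have "of_int d * (2 * snd x)^2 \<in> \<int>" by simp
  hence "2 * snd x \<in> \<int>" using sqfree_int_sq[OF sf] by blast
  then obtain Y where Y: "2 * snd x = of_int Y" by (auto elim: Ints_cases)
  have "of_int (X^2 - d*Y^2) = (2 * fst x)^2 - of_int d * (2 * snd x)^2" using X Y by simp
  also have "\<dots> = 4 * qnorm d x" unfolding qnorm_def by (simp add: power2_eq_square algebra_simps)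
  also have "\<dots> = of_int (4*n)" using nn by simp
  finally have "X^2 - d*Y^2 = 4*n" by (metis of_int_eq_iff)
  hence "4 dvd (X^2 - d*Y^2)" by simp
  moreover have "fst x = of_int X / 2" "snd x = of_int Y / 2" using X Y by (simp_all add: field_simps)
  ultimately show ?thesis using that by blast
qed

lemma OK_intro:
  fixes X Y :: int
  assumes "4 dvd (X^2 - d*Y^2)"
  shows "(of_int X / 2, of_int Y / 2) \<in> OK d"
proof -
  obtain n where n: "X^2 - d*Y^2 = 4*n" using assms by (auto elim: dvdE)
  have "qnorm d (of_int X / 2, of_int Y / 2) = of_int (X^2 - d*Y^2) / 4"
    unfolding qnorm_def by (simp add: power_divide field_simps)
  also have "\<dots> = of_int n" using n by simp
  finally show ?thesis unfolding OK_def qtr_def by simp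
qed

lemma OK_mul:
  assumes "x \<in> OK d" "y \<in> OK d" shows "qmul d x y \<in> OK d"
proof -
  obtain X Y where X: "fst x = of_int X / 2" "snd x = of_int Y / 2" "4 dvd (X^2 - d*Y^2)"
    using OK_int[OF assms(1)] by blast
  obtain X' Y' where X': "fst y = of_int X' / 2" "snd y = of_int Y' / 2" "4 dvd (X'^2 - d*Y'^2)"
    using OK_int[OF assms(2)] by blast
  have "even (X^2 - d*Y^2)" using X(3) by (meson dvd_trans even_numeral dvd_refl) 
  hence p1: "even X \<longleftrightarrow> (even d \<or> even Y)" by (auto simp: even_diff even_mult_iff)
  have "even (X'^2 - d*Y'^2)" using X'(3) by (meson dvd_trans even_numeral dvd_refl)
  hence p2: "even X' \<longleftrightarrow> (even d \<or> even Y')" by (auto simp: even_diff even_mult_iff)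
  have ev: "even (X*X' + d*Y*Y')" using p1 p2 by (auto simp: even_add even_mult_iff)
  then obtain k where k: "X*X' + d*Y*Y' = 2*k" by (rule evenE)
  have "qtr (qmul d x y) = of_int (X*X' + d*Y*Y') / 2"
    unfolding qtr_def qmul_def using X X' by (simp add: field_simps)
  also have "\<dots> = of_int k" using k by simp
  finally have tr: "qtr (qmul d x y) \<in> \<int>" by simp
  have "real_of_rat (qnorm d (qmul d x y)) = real_of_rat (qnorm d x * qnorm d y)"
    by (simp add: norm_real of_rat_mult)
  hence "qnorm d (qmul d x y) = qnorm d x * qnorm d y" by simp
  moreover have "qnorm d x \<in> \<int>" "qnorm d y \<in> \<int>" using assms unfolding OK_def by auto
  ultimately have "qnorm d (qmul d x y) \<in> \<int>" by simp
  thus ?thesis using tr unfolding OK_def by simp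
qed

lemma OK_conj: "x \<in> OK d \<Longrightarrow> qconj x \<in> OK d"
  unfolding OK_def qtr_def qnorm_def qconj_def by simp
lemma OK_neg: "x \<in> OK d \<Longrightarrow> qneg x \<in> OK d"
  unfolding OK_def qtr_def qnorm_def qneg_def by simp
lemma OK_one: "(1,0) \<in> OK d" unfolding OK_def qtr_def qnorm_def by simp

lemma qnorm_mul: "qnorm d (qmul d x y) = qnorm d x * qnorm d y"
proof -
  have "real_of_rat (qnorm d (qmul d x y)) = real_of_rat (qnorm d x * qnorm d y)"
    by (simp add: norm_real of_rat_mult)
  thus ?thesis by simp
qed

lemma unit_norm:
  assumes "u \<in> qunits d" shows "e1 u * e2 u = 1 \<or> e1 u * e2 u = -1"
proof -
  obtain v where v: "v \<in> OK d" "qmul d u v = (1,0)" "u \<in> OK d" using assms unfolding qunits_def by auto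
  have "qnorm d u * qnorm d v = 1" using qnorm_mul[of u v] v by (simp add: qnorm_def)
  moreover obtain a b where "qnorm d u = of_int a" "qnorm d v = of_int b"
    using v unfolding OK_def by (auto elim!: Ints_cases)
  ultimately have "a * b = 1" by (metis of_int_1 of_int_eq_iff of_int_mult)
  hence "a = 1 \<or> a = -1" using zmult_eq_1_iff by blast
  hence "qnorm d u = 1 \<or> qnorm d u = -1" using \<open>qnorm d u = of_int a\<close> by auto
  thus ?thesis using norm_real[of u] by (metis of_rat_1 of_rat_minus)
qed

lemma unit_nz: "u \<in> qunits d \<Longrightarrow> u \<noteq> (0,0)"
  using unit_norm by force

lemma unit_inv: assumes "u \<in> qunits d" obtains v where "v \<in> qunits d" "e1 u * e1 v = 1" "e2 u * e2 v = 1"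
proof -
  obtain v where v: "v \<in> OK d" "qmul d u v = (1,0)" "u \<in> OK d" using assms unfolding qunits_def by auto
  have "qmul d v u = (1,0)" using v(2) by (simp add: e1_eq_iff mult.commute)
  hence "v \<in> qunits d" using v unfolding qunits_def by auto
  moreover have "e1 u * e1 v = 1" "e2 u * e2 v = 1" using arg_cong[OF v(2), of e1] arg_cong[OF v(2), of e2] by simp_all
  ultimately show ?thesis using that by blast
qed

lemma unit_mul: assumes "u \<in> qunits d" "w \<in> qunits d" shows "qmul d u w \<in> qunits d"
proof -
  obtain v where v: "v \<in> qunits d" "e1 u * e1 v = 1" using unit_inv[OF assms(1)] by blast
  obtain v' where v': "v' \<in> qunits d" "e1 w * e1 v' = 1" using unit_inv[OF assms(2)] by blast
  have "qmul d (qmul d u w) (qmul d v v') = (1,0)"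
    using v v' by (simp add: e1_eq_iff algebra_simps) (metis mult.assoc mult.left_commute mult_1_right)
  moreover have "qmul d v v' \<in> OK d" "qmul d u w \<in> OK d" using v v' assms OK_mul unfolding qunits_def by auto
  ultimately show ?thesis unfolding qunits_def by blast
qed

lemma unit_OK: "u \<in> qunits d \<Longrightarrow> u \<in> OK d" unfolding qunits_def by auto

lemma one_unit: "(1,0) \<in> qunits d"
  unfolding qunits_def using OK_one by (auto intro!: bexI[of _ "(1,0)"] simp: e1_eq_iff)

end


fun qpow :: "int \<Rightarrow> qelt \<Rightarrow> nat \<Rightarrow> qelt" where
  "qpow d x 0 = (1,0)"
| "qpow d x (Suc n) = qmul d x (qpow d x n)"

context qf begin

abbreviation T :: "qelt \<Rightarrow> qelt \<Rightarrow> real" where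
  "T a x \<equiv> e1 a * (e1 x)^2 + e2 a * (e2 x)^2"

lemma e1_pow[simp]: "e1 (qpow d x n) = (e1 x)^n" by (induction n) auto
lemma e2_pow[simp]: "e2 (qpow d x n) = (e2 x)^n" by (induction n) auto
lemma pow_unit: "x \<in> qunits d \<Longrightarrow> qpow d x n \<in> qunits d"
  by (induction n) (auto intro: unit_mul one_unit)

lemma unit_shift: "u \<in> qunits d \<Longrightarrow> x \<in> OK d - {(0,0)} \<Longrightarrow> qmul d u x \<in> OK d - {(0,0)}"
  using OK_mul unit_OK unit_nz e1_nz by (auto simp: e1_eq_iff)

lemma T_nonneg: "totpos d a \<Longrightarrow> T a x \<ge> 0"
  by (simp add: totpos_iff)
lemma T_pos: "totpos d a \<Longrightarrow> x \<noteq> (0,0) \<Longrightarrow> T a x > 0"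
  using e1_nz[of x] by (simp add: totpos_iff add_pos_nonneg)

lemma mu_eq:
  assumes "c \<in> OK d - {(0,0)}" "\<And>x. x \<in> OK d - {(0,0)} \<Longrightarrow> T a c \<le> T a x"
  shows "mu d a = T a c"
  unfolding mu_def tf_real by (rule cInf_eq_minimum) (use assms in auto)

lemma mu_le:
  assumes "totpos d a" "x \<in> OK d - {(0,0)}" shows "mu d a \<le> T a x"
proof -
  have "bdd_below ((\<lambda>x. real_of_rat (tf d a x)) ` (OK d - {(0,0)}))"
    using T_nonneg[OF assms(1)] by (auto simp: tf_real intro!: bdd_belowI[of _ 0])
  thus ?thesis unfolding mu_def using assms(2) by (metis cInf_lower image_eqI tf_real)
qed

end

locale frame = qf +
  fixes \<delta> \<epsilon> A :: qelt and \<mu>0 :: rat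
  assumes dOK: "\<delta> \<in> OK d"
    and eunit: "\<epsilon> \<in> qunits d"
    and enorm: "e1 \<epsilon> * e2 \<epsilon> = 1"
    and egt: "e1 \<epsilon> > 1"
    and Apos: "totpos d A"
    and Amin: "\<And>x. x \<in> OK d - {(0,0)} \<Longrightarrow> real_of_rat \<mu>0 \<le> T A x"
    and A1: "T A (1,0) = real_of_rat \<mu>0"
    and Ad: "T A \<delta> = real_of_rat \<mu>0"
    and edelta: "\<exists>\<sigma>. (\<sigma> = 1 \<or> \<sigma> = -1) \<and> e1 \<epsilon> * e2 \<delta> = \<sigma> * e1 \<delta> \<and> e2 \<epsilon> * e1 \<delta> = \<sigma> * e2 \<delta>"
    and RA1: "e1 A < e2 A"
    and RA2: "e2 A < e1 A * (e1 \<epsilon>)^2"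
    and dsq: "(e1 \<delta>)^2 \<noteq> (e2 \<delta>)^2"
begin

definition "B = qmul d (qconj A) (qmul d (qconj \<epsilon>) (qconj \<epsilon>))"

abbreviation "L \<equiv> e1 \<epsilon>"

lemma L_pos: "L > 0" using egt by simp
lemma e2eps: "e2 \<epsilon> = 1 / L" using enorm L_pos by (simp add: field_simps)

lemma mu0_pos: "real_of_rat \<mu>0 > 0" using T_pos[OF Apos, of "(1,0)"] A1 by simp

lemma d_nz: "\<delta> \<noteq> (0,0)" using Ad mu0_pos by auto

lemma conj_eps_unit: "qconj \<epsilon> \<in> qunits d"
proof -
  have "qmul d (qconj \<epsilon>) \<epsilon> = (1,0)" using enorm by (simp add: e1_eq_iff mult.commute)
  moreover have "qconj \<epsilon> \<in> OK d" "\<epsilon> \<in> OK d" using eunit OK_conj unit_OK by auto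
  ultimately show ?thesis unfolding qunits_def by blast
qed

lemma e1B: "e1 B = e2 A * (1/L)^2" and e2B: "e2 B = e1 A * L^2"
  unfolding B_def by (simp_all add: e2eps power2_eq_square)

lemma Bpos: "totpos d B" using Apos L_pos by (simp add: totpos_iff e1B e2B)

lemma TB: "T B x = T A (qmul d \<epsilon> (qconj x))"
  by (simp add: e1B e2B e2eps power_mult_distrib field_simps)

lemma Bmin: "x \<in> OK d - {(0,0)} \<Longrightarrow> real_of_rat \<mu>0 \<le> T B x"
proof -
  assume x: "x \<in> OK d - {(0,0)}"
  have "qconj x \<in> OK d - {(0,0)}" using x OK_conj by (auto simp: qconj_def prod_eq_iff)
  hence "qmul d \<epsilon> (qconj x) \<in> OK d - {(0,0)}" using unit_shift eunit by blast
  from Amin[OF this] show ?thesis unfolding TB .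
qed

lemma Beps: "T B \<epsilon> = real_of_rat \<mu>0"
  using A1 TB enorm by (simp add: mult.commute)

lemma Bd: "T B \<delta> = real_of_rat \<mu>0"
proof -
  obtain \<sigma> where s: "\<sigma> = 1 \<or> \<sigma> = -1" "e1 \<epsilon> * e2 \<delta> = \<sigma> * e1 \<delta>" "e2 \<epsilon> * e1 \<delta> = \<sigma> * e2 \<delta>"
    using edelta by blast
  have "T B \<delta> = e1 A * (\<sigma> * e1 \<delta>)^2 + e2 A * (\<sigma> * e2 \<delta>)^2" using TB s by simp
  also have "\<dots> = T A \<delta>" using s(1) by (auto simp: power_mult_distrib)
  finally show ?thesis using Ad by simp
qed

definition upow :: "int \<Rightarrow> qelt" where
  "upow k = (if k \<ge> 0 then qpow d (qconj \<epsilon>) (nat k) else qpow d \<epsilon> (nat (-k)))"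

lemma upow_unit: "upow k \<in> qunits d"
  unfolding upow_def using pow_unit conj_eps_unit eunit by auto

lemma e1_upow: "e1 (upow k) = L powr (- of_int k)"
proof (cases "k \<ge> 0")
  case True
  hence "e1 (upow k) = (1/L)^(nat k)" unfolding upow_def by (simp add: e2eps)
  also have "\<dots> = L powr (- of_int k)" using True L_pos
    by (simp add: powr_minus_divide powr_realpow[symmetric] power_one_over)
  finally show ?thesis .
next
  case False
  hence "e1 (upow k) = L^(nat (-k))" unfolding upow_def by simp
  also have "\<dots> = L powr (- of_int k)" using False L_pos
    by (simp add: powr_realpow[symmetric])
  finally show ?thesis .
qed

lemma e2_upow: "e2 (upow k) = L powr (of_int k)"
proof (cases "k \<ge> 0")
  case True
  hence "e2 (upow k) = L^(nat k)" unfolding upow_def by simp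
  also have "\<dots> = L powr (of_int k)" using True L_pos
    by (simp add: powr_realpow[symmetric])
  finally show ?thesis .
next
  case False
  hence "e2 (upow k) = (1/L)^(nat (-k))" unfolding upow_def by (simp add: e2eps)
  also have "\<dots> = L powr (of_int k)" using False L_pos
    by (simp add: powr_minus_divide powr_realpow[symmetric] power_one_over)
  finally show ?thesis .
qed

end


context qf begin

lemma det_real: "e1 F * e2 G - e2 F * e1 G = -2 * sd * real_of_rat (fst F * snd G - snd F * fst G)"
  unfolding emb1_def emb2_def by (simp add: of_rat_diff of_rat_mult algebra_simps)

lemma decomp:
  fixes a F G :: qelt
  assumes D: "fst F * snd G - snd F * fst G \<noteq> 0"
  defines "\<alpha> \<equiv> (fst a * snd G - snd a * fst G) / (fst F * snd G - snd F * fst G)"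
    and "\<beta> \<equiv> (fst F * snd a - snd F * fst a) / (fst F * snd G - snd F * fst G)"
  shows "a = qadd (qscale \<alpha> F) (qscale \<beta> G)"
    and "real_of_rat \<alpha> = (e1 a * e2 G - e2 a * e1 G) / (e1 F * e2 G - e2 F * e1 G)"
    and "real_of_rat \<beta> = (e1 F * e2 a - e2 F * e1 a) / (e1 F * e2 G - e2 F * e1 G)"
proof -
  show "a = qadd (qscale \<alpha> F) (qscale \<beta> G)"
  proof -
    obtain a0 a1 where a: "a = (a0,a1)" by fastforce
    obtain f0 f1 where f: "F = (f0,f1)" by fastforce
    obtain g0 g1 where g: "G = (g0,g1)" by fastforce
    have D': "f0*g1 - f1*g0 \<noteq> 0" using D f g by simp
    have 1: "(a0*g1 - a1*g0) * f0 + (f0*a1 - f1*a0)*g0 = a0 * (f0*g1 - f1*g0)" by algebra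
    have 2: "(a0*g1 - a1*g0) * f1 + (f0*a1 - f1*a0)*g1 = a1 * (f0*g1 - f1*g0)" by algebra
    have "(a0*g1 - a1*g0)/(f0*g1 - f1*g0) * f0 + (f0*a1 - f1*a0)/(f0*g1 - f1*g0)*g0 = a0"
      using 1 D' by (simp add: divide_simps)
    moreover have "(a0*g1 - a1*g0)/(f0*g1 - f1*g0) * f1 + (f0*a1 - f1*a0)/(f0*g1 - f1*g0)*g1 = a1"
      using 2 D' by (simp add: divide_simps)
    ultimately show ?thesis unfolding qadd_def qscale_def \<alpha>_def \<beta>_def a f g by simp
  qed
  have sdz: "sd \<noteq> 0" using sd_pos by simp
  have "(e1 a * e2 G - e2 a * e1 G) / (e1 F * e2 G - e2 F * e1 G)
     = (-2 * sd * real_of_rat (fst a * snd G - snd a * fst G)) / (-2 * sd * real_of_rat (fst F * snd G - snd F * fst G))"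
    by (simp only: det_real)
  also have "\<dots> = real_of_rat \<alpha>" unfolding \<alpha>_def using sdz by (simp add: of_rat_divide)
  finally show "real_of_rat \<alpha> = (e1 a * e2 G - e2 a * e1 G) / (e1 F * e2 G - e2 F * e1 G)" by simp
  have "(e1 F * e2 a - e2 F * e1 a) / (e1 F * e2 G - e2 F * e1 G)
     = (-2 * sd * real_of_rat (fst F * snd a - snd F * fst a)) / (-2 * sd * real_of_rat (fst F * snd G - snd F * fst G))"
    by (simp only: det_real)
  also have "\<dots> = real_of_rat \<beta>" unfolding \<beta>_def using sdz by (simp add: of_rat_divide)
  finally show "real_of_rat \<beta> = (e1 F * e2 a - e2 F * e1 a) / (e1 F * e2 G - e2 F * e1 G)" by simp
qed

lemma T_lin: "T (qadd (qscale p F) (qscale q G)) x = real_of_rat p * T F x + real_of_rat q * T G x"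
  by (simp add: algebra_simps)

lemma GL:
  assumes Fp: "totpos d F" and Gp: "totpos d G" and ap: "totpos d a"
    and c: "c \<in> OK d - {(0,0)}"
    and minF: "\<And>x. x \<in> OK d - {(0,0)} \<Longrightarrow> T F c \<le> T F x"
    and minG: "\<And>x. x \<in> OK d - {(0,0)} \<Longrightarrow> T G c \<le> T G x"
    and ord: "e1 G * e2 F < e1 F * e2 G"
    and s1: "e1 G * e2 a \<le> e1 a * e2 G" and s2: "e1 a * e2 F \<le> e1 F * e2 a"
  shows "mu d a = T a c"
    and "e1 G * e2 a < e1 a * e2 G \<Longrightarrow> e1 a * e2 F < e1 F * e2 a \<Longrightarrow> \<not> perfect d a"
    and "e1 a * e2 F = e1 F * e2 a \<Longrightarrow> \<exists>l>0. a = qscale l F"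
    and "e1 G * e2 a = e1 a * e2 G \<Longrightarrow> \<exists>l>0. a = qscale l G"
proof -
  have detpos: "e1 F * e2 G - e2 F * e1 G > 0" using ord by (simp add: algebra_simps)
  hence Dnz: "fst F * snd G - snd F * fst G \<noteq> 0" using det_real[of F G] by auto
  define \<alpha> where "\<alpha> \<equiv> (fst a * snd G - snd a * fst G) / (fst F * snd G - snd F * fst G)"
  define \<beta> where "\<beta> \<equiv> (fst F * snd a - snd F * fst a) / (fst F * snd G - snd F * fst G)"
  have dec: "a = qadd (qscale \<alpha> F) (qscale \<beta> G)"
    and ra: "real_of_rat \<alpha> = (e1 a * e2 G - e2 a * e1 G) / (e1 F * e2 G - e2 F * e1 G)"
    and rb: "real_of_rat \<beta> = (e1 F * e2 a - e2 F * e1 a) / (e1 F * e2 G - e2 F * e1 G)"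
    using decomp[OF Dnz, of a] unfolding \<alpha>_def \<beta>_def by auto
  have a0: "real_of_rat \<alpha> \<ge> 0" unfolding ra using detpos s1 by (simp add: algebra_simps)
  have b0: "real_of_rat \<beta> \<ge> 0" unfolding rb using detpos s2 by (simp add: algebra_simps)
  have Ta: "\<And>x. T a x = real_of_rat \<alpha> * T F x + real_of_rat \<beta> * T G x"
    using T_lin[of \<alpha> F \<beta> G] by (simp only: dec[symmetric])
  have le: "T a c \<le> T a x" if "x \<in> OK d - {(0,0)}" for x
    unfolding Ta using minF[OF that] minG[OF that] a0 b0 by (simp add: add_mono mult_left_mono)
  show mu: "mu d a = T a c" using mu_eq[OF c le] by blast
  show "\<not> perfect d a" if st1: "e1 G * e2 a < e1 a * e2 G" and st2: "e1 a * e2 F < e1 F * e2 a"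
  proof
    assume pa: "perfect d a"
    have ap': "real_of_rat \<alpha> > 0" unfolding ra using detpos st1 by (simp add: algebra_simps)
    have bp': "real_of_rat \<beta> > 0" unfolding rb using detpos st2 by (simp add: algebra_simps)
    have TFc: "T F c > 0" using T_pos[OF Fp] c by auto
    have TGc: "T G c > 0" using T_pos[OF Gp] c by auto
    define t where "t = \<beta> * tf d G c / (2 * tf d F c)"
    have rt: "real_of_rat t = real_of_rat \<beta> * T G c / (2 * T F c)"
      unfolding t_def by (simp add: of_rat_divide of_rat_mult tf_real)
    define b where "b = qadd (qscale (\<alpha> + t) F) (qscale (\<beta>/2) G)"
    have tpos: "real_of_rat t > 0" unfolding rt using bp' TFc TGc by simp
    have bpos: "totpos d b" unfolding b_def using Fp Gp ap' bp' tpos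
      by (simp add: totpos_iff of_rat_add of_rat_divide add_pos_pos)
    have Tb: "T b x = T a x" if "T F x = T F c" "T G x = T G c" for x
    proof -
      have "T b x = real_of_rat (\<alpha>+t) * T F c + real_of_rat (\<beta>/2) * T G c"
        unfolding b_def T_lin using that by simp
      also have "\<dots> = real_of_rat \<alpha> * T F c + real_of_rat \<beta> * T G c"
        using TFc by (simp add: of_rat_add of_rat_divide rt field_simps)
      also have "\<dots> = T a x" unfolding Ta using that by simp
      finally show ?thesis .
    qed
    have "\<forall>v \<in> minvecs d a. real_of_rat (tf d b v) = mu d a"
    proof
      fix v assume v: "v \<in> minvecs d a"
      hence vOK: "v \<in> OK d" and Tv: "T a v = T a c" unfolding minvecs_def using mu by (auto simp: tf_real)
      have Tac: "T a c > 0" using T_pos[OF ap] c by auto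
      have vnz: "v \<noteq> (0,0)"
      proof
        assume "v = (0,0)" hence "T a v = 0" by simp
        thus False using Tv Tac by simp
      qed
      hence v1: "T F c \<le> T F v" "T G c \<le> T G v" using minF minG vOK by auto
      have "real_of_rat \<alpha> * T F v + real_of_rat \<beta> * T G v = real_of_rat \<alpha> * T F c + real_of_rat \<beta> * T G c"
        using Tv unfolding Ta .
      hence e: "real_of_rat \<alpha> * (T F v - T F c) + real_of_rat \<beta> * (T G v - T G c) = 0"
        by (simp add: algebra_simps)
      have p1: "real_of_rat \<alpha> * (T F v - T F c) \<ge> 0" using ap' v1 by simp
      have p2: "real_of_rat \<beta> * (T G v - T G c) \<ge> 0" using bp' v1 by simp
      have "real_of_rat \<alpha> * (T F v - T F c) = 0" "real_of_rat \<beta> * (T G v - T G c) = 0"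
        using e p1 p2 by linarith+
      hence "T F v = T F c" "T G v = T G c" using ap' bp' by auto
      hence "T b v = T a v" by (rule Tb)
      thus "real_of_rat (tf d b v) = mu d a" using Tv mu by (simp add: tf_real)
    qed
    hence "b = a" using pa bpos unfolding perfect_def by blast
    hence "e1 b = e1 a" "e2 b = e2 a" by auto
    hence "real_of_rat t * e1 F = real_of_rat (\<beta>/2) * e1 G" "real_of_rat t * e2 F = real_of_rat (\<beta>/2) * e2 G"
      unfolding b_def using arg_cong[OF dec, of e1] arg_cong[OF dec, of e2]
      by (simp_all add: of_rat_add of_rat_divide algebra_simps)
    hence "real_of_rat t * (e1 F * e2 G - e2 F * e1 G) = 0"
      by (metis (no_types, opaque_lifting) mult.commute mult.left_commute right_diff_distrib' diff_self)
    thus False using tpos detpos by simp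
  qed
  show "\<exists>l>0. a = qscale l F" if eq: "e1 a * e2 F = e1 F * e2 a"
  proof -
    have "real_of_rat \<beta> = 0" unfolding rb using eq by (simp add: algebra_simps)
    hence "a = qscale \<alpha> F" using dec by (simp add: e1_eq_iff)
    moreover hence "\<alpha> > 0" using ap Fp by (auto simp: totpos_iff zero_less_mult_iff)
    ultimately show ?thesis by blast
  qed
  show "\<exists>l>0. a = qscale l G" if eq: "e1 G * e2 a = e1 a * e2 G"
  proof -
    have "real_of_rat \<alpha> = 0" unfolding ra using eq by (simp add: algebra_simps)
    hence "a = qscale \<beta> G" using dec by (simp add: e1_eq_iff)
    moreover hence "\<beta> > 0" using ap Gp by (auto simp: totpos_iff zero_less_mult_iff)
    ultimately show ?thesis by blast
  qed
qed

end


lemma find_k: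
  fixes l y :: real assumes l: "l > 1" and y: "y > 0"
  shows "\<exists>k::int. l powr (4 * of_int k) \<le> y \<and> y < l powr (4 * of_int k + 4)"
proof -
  define t where "t = ln y / (4 * ln l)"
  define k where "k = floor t"
  have lnl: "ln l > 0" using l by simp
  have "of_int k \<le> t" "t < of_int k + 1" unfolding k_def by linarith+
  hence a: "4 * of_int k * ln l \<le> ln y" and b: "ln y < (4 * of_int k + 4) * ln l"
    unfolding t_def using lnl by (simp_all add: field_simps)
  have "l powr (4 * of_int k) = exp (4 * of_int k * ln l)" using l by (simp add: powr_def)
  also have "\<dots> \<le> exp (ln y)" using a by simp
  also have "\<dots> = y" using y by simp
  finally have 1: "l powr (4 * of_int k) \<le> y" .
  have "y = exp (ln y)" using y by simp
  also have "\<dots> < exp ((4 * of_int k + 4) * ln l)" using b by simp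
  also have "\<dots> = l powr (4 * of_int k + 4)" using l by (simp add: powr_def)
  finally show ?thesis using 1 by blast
qed

context frame begin

lemma T_shift: "T (qmul d F (qmul d u u)) x = T F (qmul d u x)"
  by (simp add: power_mult_distrib algebra_simps power2_eq_square)

lemma classify:
  assumes ap: "totpos d a"
  shows "\<exists>w\<in>qunits d. mu d a = T a (qmul d w \<delta>) \<or> mu d a = T a (qmul d w \<epsilon>)"
    and "perfect d a \<Longrightarrow> form_rel d A a \<or> form_rel d B a"
proof -
  have a1: "e1 a > 0" and a2: "e2 a > 0" using ap by (auto simp: totpos_iff)
  have A1p: "e1 A > 0" and A2p: "e2 A > 0" using Apos by (auto simp: totpos_iff)
  have "L > 1" using egt .
  have y: "(e1 A * e2 a) / (e2 A * e1 a) > 0" using a1 a2 A1p A2p by simp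
  obtain k :: int where k1: "L powr (4 * of_int k) \<le> (e1 A * e2 a) / (e2 A * e1 a)"
    and k2: "(e1 A * e2 a) / (e2 A * e1 a) < L powr (4 * of_int k + 4)"
    using find_k[OF egt y] by blast
  define p where "p = L powr (of_int k)"
  have pp: "p > 0" unfolding p_def using L_pos by simp
  have p4: "L powr (4 * of_int k) = p^4"
  proof -
    have "L powr (4 * of_int k) = (L powr of_int k) powr 4" by (simp add: powr_powr mult.commute)
    also have "\<dots> = p^4" unfolding p_def using powr_realpow[of "L powr of_int k" 4] L_pos by simp
    finally show ?thesis .
  qed
  have p44: "L powr (4 * of_int k + 4) = p^4 * L^4"
  proof -
    have "L powr (4 * of_int k + 4) = L powr (4 * of_int k) * L powr 4" by (simp add: powr_add)
    also have "\<dots> = p^4 * L^4" using p4 powr_realpow[of L 4] L_pos by simp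
    finally show ?thesis .
  qed
  define u where "u = upow k"
  define u' where "u' = upow (k+1)"
  define v where "v = upow (-k)"
  have uu: "u \<in> qunits d" "u' \<in> qunits d" "v \<in> qunits d" unfolding u_def u'_def v_def using upow_unit by auto
  have e1u: "e1 u = 1/p" and e2u: "e2 u = p" unfolding u_def p_def e1_upow e2_upow
    by (simp_all add: powr_minus_divide)
  have e1u': "e1 u' = 1/(p*L)"
  proof -
    have "e1 u' = L powr (-(of_int k + 1))" unfolding u'_def e1_upow by simp
    also have "\<dots> = 1 / L powr (of_int k + 1)" by (rule powr_minus_divide)
    also have "\<dots> = 1/(p*L)" unfolding p_def using L_pos by (simp add: powr_add)
    finally show ?thesis .
  qed
  have e2u': "e2 u' = p*L"
  proof -
    have "e2 u' = L powr (of_int k + 1)" unfolding u'_def e2_upow by simp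
    also have "\<dots> = p*L" unfolding p_def using L_pos by (simp add: powr_add)
    finally show ?thesis .
  qed
  have e1v: "e1 v = p" and e2v: "e2 v = 1/p" unfolding v_def p_def e1_upow e2_upow
    by (simp_all add: powr_minus_divide)
  define F where "F = qmul d A (qmul d u u)"
  define G where "G = qmul d B (qmul d u u)"
  define H where "H = qmul d A (qmul d u' u')"
  define c1 where "c1 = qmul d v \<delta>"
  define c2 where "c2 = qmul d v \<epsilon>"
  have c1: "c1 \<in> OK d - {(0,0)}" unfolding c1_def using unit_shift uu dOK d_nz by auto
  have c2: "c2 \<in> OK d - {(0,0)}" unfolding c2_def using unit_shift uu eunit unit_OK unit_nz by auto
  have Fp: "totpos d F" "totpos d G" "totpos d H" unfolding F_def G_def H_def
    using Apos Bpos pp L_pos by (auto simp: totpos_iff e1u e2u e1u' e2u')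
  have TF: "T F x = T A (qmul d u x)" "T G x = T B (qmul d u x)" "T H x = T A (qmul d u' x)" for x
    unfolding F_def G_def H_def T_shift by auto
  have "T A (qmul d u c1) = T A \<delta>" unfolding c1_def using pp by (simp add: e1u e2u e1v e2v power_mult_distrib)
  hence TFc1: "T F c1 = real_of_rat \<mu>0" using TF Ad by simp
  have "T B (qmul d u c1) = T B \<delta>" unfolding c1_def using pp by (simp add: e1u e2u e1v e2v power_mult_distrib)
  hence TGc1: "T G c1 = real_of_rat \<mu>0" using TF Bd by simp
  have "T B (qmul d u c2) = T B \<epsilon>" unfolding c2_def using pp by (simp add: e1u e2u e1v e2v power_mult_distrib)
  hence TGc2: "T G c2 = real_of_rat \<mu>0" using TF Beps by simp
  have "T A (qmul d u' c2) = T A (1,0)" unfolding c2_def using pp L_pos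
    by (simp add: e1u' e2u' e1v e2v e2eps power_mult_distrib)
  hence THc2: "T H c2 = real_of_rat \<mu>0" using TF A1 by simp
  have minF: "T F c1 \<le> T F x" "T G c1 \<le> T G x" "T G c2 \<le> T G x" "T H c2 \<le> T H x"
    if "x \<in> OK d - {(0,0)}" for x
  proof -
    have ux: "qmul d u x \<in> OK d - {(0,0)}" "qmul d u' x \<in> OK d - {(0,0)}"
      using unit_shift[OF _ that] uu by auto
    show "T F c1 \<le> T F x" using Amin[OF ux(1)] by (simp only: TFc1 TF(1)[of x])
    show "T G c1 \<le> T G x" using Bmin[OF ux(1)] by (simp only: TGc1 TF(2)[of x])
    show "T G c2 \<le> T G x" using Bmin[OF ux(1)] by (simp only: TGc2 TF(2)[of x])
    show "T H c2 \<le> T H x" using Amin[OF ux(2)] by (simp only: THc2 TF(3)[of x])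
  qed
  have eF: "e1 F = e1 A / p^2" "e2 F = e2 A * p^2" unfolding F_def using pp
    by (simp_all add: e1u e2u power2_eq_square)
  have eG: "e1 G = e2 A / (L^2 * p^2)" "e2 G = e1 A * L^2 * p^2" unfolding G_def using pp
    by (simp_all add: e1u e2u e1B e2B power2_eq_square)
  have eH: "e1 H = e1 A / (L^2 * p^2)" "e2 H = e2 A * L^2 * p^2" unfolding H_def using pp L_pos
    by (simp_all add: e1u' e2u' power2_eq_square)
  have Lp: "L > 0" using L_pos .
  have ordFG: "e1 G * e2 F < e1 F * e2 G"
  proof -
    have "e2 A * e2 A < (e1 A * L^2) * (e1 A * L^2)" using RA2 A2p by (intro mult_strict_mono) auto
    thus ?thesis unfolding eF eG using pp Lp by (simp add: field_simps power2_eq_square)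
  qed
  have ordGH: "e1 H * e2 G < e1 G * e2 H"
  proof -
    have "e1 A * e1 A < e2 A * e2 A" using RA1 A1p by (intro mult_strict_mono) auto
    thus ?thesis unfolding eG eH using pp Lp by (simp add: field_simps power2_eq_square)
  qed
  have sF: "e1 a * e2 F \<le> e1 F * e2 a"
  proof -
    have "p^4 * (e2 A * e1 a) \<le> e1 A * e2 a" using k1 p4 a1 A2p by (simp add: field_simps)
    thus ?thesis unfolding eF using pp by (simp add: field_simps power2_eq_square power4_eq_xxxx)
  qed
  have sH: "e1 H * e2 a < e1 a * e2 H"
  proof -
    have "e1 A * e2 a < p^4 * L^4 * (e2 A * e1 a)" using k2 p44 a1 A2p by (simp add: field_simps)
    thus ?thesis unfolding eH using pp Lp by (simp add: field_simps power2_eq_square power4_eq_xxxx)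
  qed
  have main: "(\<exists>c\<in>{c1, c2}. mu d a = T a c) \<and> (perfect d a \<longrightarrow> (\<exists>l>0. a = qscale l F \<or> a = qscale l G \<or> a = qscale l H))"
  proof (cases "e1 G * e2 a \<le> e1 a * e2 G")
    case True
    note gl = GL[OF Fp(1) Fp(2) ap c1 minF(1) minF(2) ordFG True sF]
    show ?thesis
    proof (intro conjI impI)
      show "\<exists>c\<in>{c1, c2}. mu d a = T a c" using gl(1) by blast
      assume pa: "perfect d a"
      show "\<exists>l>0. a = qscale l F \<or> a = qscale l G \<or> a = qscale l H"
      proof (cases "e1 G * e2 a = e1 a * e2 G")
        case True thus ?thesis using gl(4) by blast
      next
        case False
        show ?thesis
        proof (cases "e1 a * e2 F = e1 F * e2 a")
          case True thus ?thesis using gl(3) by blast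
        next
          case False2: False
          have st1: "e1 G * e2 a < e1 a * e2 G" using True False by simp
          have st2: "e1 a * e2 F < e1 F * e2 a" using sF False2 by simp
          show ?thesis using gl(2) st1 st2 pa by blast
        qed
      qed
    qed
  next
    case False
    hence sG: "e1 a * e2 G \<le> e1 G * e2 a" by simp
    note gl = GL[OF Fp(2) Fp(3) ap c2 minF(3) minF(4) ordGH less_imp_le[OF sH] sG]
    show ?thesis
    proof (intro conjI impI)
      show "\<exists>c\<in>{c1, c2}. mu d a = T a c" using gl(1) by blast
      assume pa: "perfect d a"
      show "\<exists>l>0. a = qscale l F \<or> a = qscale l G \<or> a = qscale l H"
      proof -
        have st2: "e1 a * e2 G < e1 G * e2 a" using False by simp
        show ?thesis using gl(2) sH st2 pa by blast
      qed
    qed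
  qed
  show "\<exists>w\<in>qunits d. mu d a = T a (qmul d w \<delta>) \<or> mu d a = T a (qmul d w \<epsilon>)"
    using main uu unfolding c1_def c2_def by blast
  show "form_rel d A a \<or> form_rel d B a" if "perfect d a"
    using main that uu unfolding form_rel_def F_def G_def H_def by blast
qed

end


context qf begin

lemma form_rel_real:
  "form_rel d a b \<longleftrightarrow> (\<exists>u\<in>qunits d. \<exists>l::rat. l > 0 \<and> e1 b = real_of_rat l * e1 a * (e1 u)^2)"
  unfolding form_rel_def by (simp add: e1_eq_iff power2_eq_square mult.assoc)

lemma form_rel_refl: "form_rel d a a"
  unfolding form_rel_real using one_unit by (auto intro!: bexI[of _ "(1,0)"] exI[of _ 1])

lemma form_rel_sym: assumes "form_rel d a b" shows "form_rel d b a"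
proof -
  obtain u l where u: "u \<in> qunits d" "l > 0" "e1 b = real_of_rat l * e1 a * (e1 u)^2"
    using assms unfolding form_rel_real by blast
  obtain v where v: "v \<in> qunits d" "e1 u * e1 v = 1" using unit_inv[OF u(1)] by blast
  have "e1 a = real_of_rat (1/l) * e1 b * (e1 v)^2"
    using u(2,3) v(2) by (simp add: of_rat_divide field_simps power2_eq_square)
  thus ?thesis unfolding form_rel_real using v(1) u(2) by (auto intro!: exI[of _ "1/l"])
qed

lemma form_rel_trans: assumes "form_rel d a b" "form_rel d b c" shows "form_rel d a c"
proof -
  obtain u l where u: "u \<in> qunits d" "l > 0" "e1 b = real_of_rat l * e1 a * (e1 u)^2"
    using assms(1) unfolding form_rel_real by blast
  obtain w l' where w: "w \<in> qunits d" "l' > 0" "e1 c = real_of_rat l' * e1 b * (e1 w)^2"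
    using assms(2) unfolding form_rel_real by blast
  have "e1 c = real_of_rat (l'*l) * e1 a * (e1 (qmul d u w))^2"
    using u(3) w(3) by (simp add: of_rat_mult power_mult_distrib)
  moreover have "qmul d u w \<in> qunits d" using unit_mul u w by blast
  moreover have "l' * l > 0" using u w by simp
  ultimately show ?thesis unfolding form_rel_real by blast
qed

end

context frame begin

lemma mu_A: "mu d A = real_of_rat \<mu>0"
  using mu_eq[of "(1,0)" A] OK_one Amin A1 by auto

lemma mu_B: "mu d B = real_of_rat \<mu>0"
proof -
  have "\<epsilon> \<in> OK d - {(0,0)}" using eunit unit_OK unit_nz by auto
  thus ?thesis using mu_eq[of \<epsilon> B] Bmin Beps by auto
qed

lemma perfect_A: "perfect d A"
  unfolding perfect_def
proof (intro conjI allI impI)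
  show "totpos d A" by (rule Apos)
  fix b assume h: "totpos d b \<and> (\<forall>v\<in>minvecs d A. real_of_rat (tf d b v) = mu d A)"
  have "(1,0) \<in> minvecs d A" "\<delta> \<in> minvecs d A" unfolding minvecs_def using OK_one dOK mu_A A1 Ad
    by (auto simp: tf_real)
  hence "T b (1,0) = T A (1,0)" "T b \<delta> = T A \<delta>" using h mu_A A1 Ad by (auto simp: tf_real)
  hence e: "e1 b + e2 b = e1 A + e2 A" "e1 b * (e1 \<delta>)^2 + e2 b * (e2 \<delta>)^2 = e1 A * (e1 \<delta>)^2 + e2 A * (e2 \<delta>)^2"
    by simp_all
  have "(e1 b - e1 A) * ((e1 \<delta>)^2 - (e2 \<delta>)^2) = 0" using e by algebra
  hence "e1 b = e1 A" using dsq by simp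
  thus "b = A" by (rule e1_inj)
qed

lemma sig: obtains \<sigma> where "\<sigma> = 1 \<or> \<sigma> = -1" "L * e2 \<delta> = \<sigma> * e1 \<delta>" "e1 \<delta> = \<sigma> * L * e2 \<delta>"
proof -
  obtain \<sigma> where s: "\<sigma> = 1 \<or> \<sigma> = -1" "e1 \<epsilon> * e2 \<delta> = \<sigma> * e1 \<delta>" "e2 \<epsilon> * e1 \<delta> = \<sigma> * e2 \<delta>"
    using edelta by blast
  have "e1 \<delta> = \<sigma> * L * e2 \<delta>" using s(1) s(3) L_pos unfolding e2eps by (auto simp: field_simps)
  thus ?thesis using that s by blast
qed

lemma perfect_B: "perfect d B"
  unfolding perfect_def
proof (intro conjI allI impI)
  show "totpos d B" by (rule Bpos)
  fix b assume h: "totpos d b \<and> (\<forall>v\<in>minvecs d B. real_of_rat (tf d b v) = mu d B)"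
  have "\<epsilon> \<in> minvecs d B" "\<delta> \<in> minvecs d B" unfolding minvecs_def using eunit unit_OK dOK mu_B Beps Bd
    by (auto simp: tf_real)
  hence "T b \<epsilon> = T B \<epsilon>" "T b \<delta> = T B \<delta>" using h mu_B Beps Bd by (auto simp: tf_real)
  hence e: "(e1 b - e1 B) * L^2 + (e2 b - e2 B) * (1/L)^2 = 0"
     "(e1 b - e1 B) * (e1 \<delta>)^2 + (e2 b - e2 B) * (e2 \<delta>)^2 = 0"
    by (simp_all add: e2eps algebra_simps)
  obtain \<sigma> where s: "\<sigma> = 1 \<or> \<sigma> = -1" "L * e2 \<delta> = \<sigma> * e1 \<delta>" "e1 \<delta> = \<sigma> * L * e2 \<delta>" by (rule sig)
  have s2: "\<sigma>^2 = 1" using s(1) by auto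
  have "(e1 b - e1 B) * (L^2 * (e2 \<delta>)^2 - (1/L)^2 * (e1 \<delta>)^2) = 0"
    using e by algebra
  moreover have "L^2 * (e2 \<delta>)^2 = (e1 \<delta>)^2" using s(2) s2 by (metis power_mult_distrib mult_1 power2_eq_square)
  moreover have "(1/L)^2 * (e1 \<delta>)^2 = (e2 \<delta>)^2" using s(3) s2 L_pos
    by (simp add: power_mult_distrib field_simps)
  ultimately have "(e1 b - e1 B) * ((e1 \<delta>)^2 - (e2 \<delta>)^2) = 0" by simp
  hence "e1 b = e1 B" using dsq by simp
  thus "b = B" by (rule e1_inj)
qed

lemma not_rel_AB:
  assumes N6: "\<And>x. x \<in> OK d \<Longrightarrow> T A x = real_of_rat \<mu>0 \<Longrightarrow> (e1 x * e2 x = 1 \<or> e1 x * e2 x = -1) \<Longrightarrow> e1 x = 1 \<or> e1 x = -1"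
    and nconj: "T A (qconj \<delta>) \<noteq> real_of_rat \<mu>0"
  shows "\<not> form_rel d A B"
proof
  assume "form_rel d A B"
  then obtain u l where u: "u \<in> qunits d" "l > 0" "B = qscale l (qmul d A (qmul d u u))"
    unfolding form_rel_def by blast
  have TBx: "T B x = real_of_rat l * T A (qmul d u x)" for x
    using u(3) by (simp add: power_mult_distrib algebra_simps power2_eq_square)
  obtain v where v: "v \<in> qunits d" "e1 u * e1 v = 1" "e2 u * e2 v = 1" using unit_inv[OF u(1)] by blast
  have m0: "real_of_rat \<mu>0 > 0" by (rule mu0_pos)
  have "T A (qmul d u v) = real_of_rat \<mu>0" using A1 v by simp
  moreover have "real_of_rat \<mu>0 \<le> T B v" using Bmin v unit_OK unit_nz by auto
  ultimately have l1: "real_of_rat l \<ge> 1" using TBx[of v] m0 by (simp add: mult_le_cancel_right1)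
  have ue: "qmul d u \<epsilon> \<in> OK d - {(0,0)}" using unit_shift u eunit unit_OK unit_nz by auto
  have "real_of_rat l * T A (qmul d u \<epsilon>) = real_of_rat \<mu>0" using TBx[of \<epsilon>] Beps by simp
  moreover have "T A (qmul d u \<epsilon>) \<ge> real_of_rat \<mu>0" using Amin ue by blast
  ultimately have "real_of_rat l * real_of_rat \<mu>0 \<le> real_of_rat \<mu>0" using l1
    mult_left_mono[of "real_of_rat \<mu>0" "T A (qmul d u \<epsilon>)" "real_of_rat l"] by linarith
  hence l2: "real_of_rat l \<le> 1" using m0 by (simp add: mult_le_cancel_right1)
  have l: "real_of_rat l = 1" using l1 l2 by simp
  have Tue: "T A (qmul d u \<epsilon>) = real_of_rat \<mu>0" using TBx[of \<epsilon>] Beps l by simp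
  have Tud: "T A (qmul d u \<delta>) = real_of_rat \<mu>0" using TBx[of \<delta>] Bd l by simp
  have nu: "e1 u * e2 u = 1 \<or> e1 u * e2 u = -1" using unit_norm[OF u(1)] .
  have eqn: "e1 (qmul d u \<epsilon>) * e2 (qmul d u \<epsilon>) = e1 u * e2 u" using enorm by (simp add: algebra_simps)
  have nn: "e1 (qmul d u \<epsilon>) * e2 (qmul d u \<epsilon>) = 1 \<or> e1 (qmul d u \<epsilon>) * e2 (qmul d u \<epsilon>) = -1"
    unfolding eqn by (rule nu)
  have "qmul d u \<epsilon> \<in> OK d" using ue by blast
  from N6[OF this Tue nn] have "e1 (qmul d u \<epsilon>) = 1 \<or> e1 (qmul d u \<epsilon>) = -1" .
  hence eu: "e1 u = 1/L \<or> e1 u = -1/L" using L_pos by (auto simp: field_simps)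
  hence eu2: "(e1 u)^2 = (1/L)^2" by auto
  have "(e1 u * e2 u)^2 = 1" using nu by auto
  hence "(e1 u)^2 * (e2 u)^2 = 1" by (simp add: power_mult_distrib)
  hence "(1/L)^2 * (e2 u)^2 = 1" using eu2 by simp
  hence "(e2 u)^2 = L^2" using L_pos by (simp add: field_simps)
  obtain \<sigma> where s: "\<sigma> = 1 \<or> \<sigma> = -1" "L * e2 \<delta> = \<sigma> * e1 \<delta>" "e1 \<delta> = \<sigma> * L * e2 \<delta>" by (rule sig)
  have s2: "\<sigma>^2 = 1" using s(1) by auto
  have "T A (qmul d u \<delta>) = e1 A * ((e1 u)^2 * (e1 \<delta>)^2) + e2 A * ((e2 u)^2 * (e2 \<delta>)^2)"
    by (simp add: power_mult_distrib)
  also have "\<dots> = e1 A * ((1/L)^2 * (e1 \<delta>)^2) + e2 A * (L^2 * (e2 \<delta>)^2)"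
    using eu2 \<open>(e2 u)^2 = L^2\<close> by simp
  also have "(1/L)^2 * (e1 \<delta>)^2 = (e2 \<delta>)^2" using s(3) s2 L_pos
    by (simp add: power_mult_distrib field_simps)
  also have "L^2 * (e2 \<delta>)^2 = (e1 \<delta>)^2" using s(2) s2 by (metis power_mult_distrib mult_1 power2_eq_square)
  finally have "T A (qmul d u \<delta>) = T A (qconj \<delta>)" by simp
  thus False using Tud nconj by simp
qed

lemma unit_red: assumes "\<delta> \<in> qunits d" shows "unit_reducible d"
  unfolding unit_reducible_def
proof (intro allI impI)
  fix a assume ap: "totpos d a"
  obtain w where w: "w \<in> qunits d" "mu d a = T a (qmul d w \<delta>) \<or> mu d a = T a (qmul d w \<epsilon>)"
    using classify(1)[OF ap] by blast
  then obtain c where c: "c \<in> qunits d" "mu d a = T a c"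
    using unit_mul[OF w(1) assms] unit_mul[OF w(1) eunit] by blast
  have "Inf ((\<lambda>u. real_of_rat (tf d a u)) ` qunits d) = T a c"
  proof (rule cInf_eq_minimum)
    show "T a c \<in> (\<lambda>u. real_of_rat (tf d a u)) ` qunits d" using c by (auto simp: tf_real)
    fix y assume "y \<in> (\<lambda>u. real_of_rat (tf d a u)) ` qunits d"
    then obtain u where "u \<in> qunits d" "y = T a u" by (auto simp: tf_real)
    thus "T a c \<le> y" using mu_le[OF ap, of u] c unit_OK unit_nz by auto
  qed
  thus "mu d a = Inf ((\<lambda>u. real_of_rat (tf d a u)) ` qunits d)" using c by simp
qed

lemma nK_two:
  assumes N6: "\<And>x. x \<in> OK d \<Longrightarrow> T A x = real_of_rat \<mu>0 \<Longrightarrow> (e1 x * e2 x = 1 \<or> e1 x * e2 x = -1) \<Longrightarrow> e1 x = 1 \<or> e1 x = -1"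
    and nconj: "T A (qconj \<delta>) \<noteq> real_of_rat \<mu>0"
  shows "nK d = 2"
proof -
  define R where "R = {(a, b). perfect d a \<and> perfect d b \<and> form_rel d a b}"
  have Rim: "R `` {a} = {b. perfect d b \<and> form_rel d a b}" if "perfect d a" for a
    using that unfolding R_def by auto
  have eq: "R `` {a} = R `` {c}" if "perfect d a" "perfect d c" "form_rel d c a" for a c
  proof -
    have "form_rel d a b \<longleftrightarrow> form_rel d c b" for b
      using form_rel_trans[OF that(3), of b] form_rel_trans[OF form_rel_sym[OF that(3)], of b] by blast
    thus ?thesis unfolding Rim[OF that(1)] Rim[OF that(2)] by blast
  qed
  have Q: "{a. perfect d a} // R = {R `` {A}, R `` {B}}"
  proof
    show "{a. perfect d a} // R \<subseteq> {R `` {A}, R `` {B}}"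
    proof
      fix X assume "X \<in> {a. perfect d a} // R"
      then obtain a where a: "perfect d a" "X = R `` {a}" unfolding quotient_def by blast
      have "form_rel d A a \<or> form_rel d B a" using classify(2) a(1) unfolding perfect_def by blast
      thus "X \<in> {R `` {A}, R `` {B}}" using eq[OF a(1) perfect_A] eq[OF a(1) perfect_B] a(2) by blast
    qed
    show "{R `` {A}, R `` {B}} \<subseteq> {a. perfect d a} // R"
      using perfect_A perfect_B unfolding quotient_def by blast
  qed
  have "B \<in> R `` {B}" using Rim[OF perfect_B] perfect_B form_rel_refl by blast
  moreover have "B \<notin> R `` {A}" using Rim[OF perfect_A] not_rel_AB[OF N6 nconj] by blast
  ultimately have "R `` {A} \<noteq> R `` {B}" by blast
  hence "card {R `` {A}, R `` {B}} = 2" by simp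
  thus ?thesis unfolding nK_def R_def[symmetric] Q .
qed

end


lemma RA2_aux:
  fixes P Q \<rho> :: real
  assumes "\<rho> > 0" "(P*Q)^2 = \<rho>^2" "P^2 \<ge> 2*\<rho>^2"
  shows "P^2 - 1 < (1 - Q^2) * (P^2/\<rho>)^2"
proof -
  have P2: "P^2 > 0" using assms by (smt (verit) zero_less_power)
  have Q2: "Q^2 = \<rho>^2 / P^2" using assms(2) P2 by (simp add: power_mult_distrib field_simps)
  have "(1 - Q^2) * (P^2/\<rho>)^2 = (P^2)^2/\<rho>^2 - P^2" unfolding Q2 using P2 assms(1)
    by (simp add: field_simps power2_eq_square)
  also have "(P^2)^2/\<rho>^2 \<ge> 2 * P^2"
  proof -
    have m: "P^2 * (2*\<rho>^2) \<le> P^2 * P^2" using mult_left_mono[OF assms(3), of "P^2"] P2 by simp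
    have "2 * P^2 = (P^2 * (2*\<rho>^2))/\<rho>^2" using assms(1) by simp
    also have "\<dots> \<le> (P^2 * P^2)/\<rho>^2" by (rule divide_right_mono[OF m]) simp
    finally show ?thesis by (simp add: power2_eq_square)
  qed
  ultimately show ?thesis by linarith
qed

locale gen = qf +
  fixes \<delta> :: qelt and n :: int
  assumes dOK: "\<delta> \<in> OK d"
    and Nd: "qnorm d \<delta> = of_int n"
    and nnz: "n \<noteq> 0"
    and big: "(e1 \<delta>)^2 \<ge> 2 * (of_int n)^2"
    and trint: "qtr (qscale (1 / of_int \<bar>n\<bar>) (qmul d \<delta> \<delta>)) \<in> \<int>"
    and Amin0: "\<And>x. x \<in> OK d - {(0,0)} \<Longrightarrow>
        tf d (qmul d (0,1) (qadd (1,0) (qneg (qmul d (qconj \<delta>) (qconj \<delta>))))) (1,0)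
        \<le> tf d (qmul d (0,1) (qadd (1,0) (qneg (qmul d (qconj \<delta>) (qconj \<delta>))))) x"
begin

definition "Ag = qmul d (0,1) (qadd (1,0) (qneg (qmul d (qconj \<delta>) (qconj \<delta>))))"
definition "\<epsilon>g = qscale (1 / of_int \<bar>n\<bar>) (qmul d \<delta> \<delta>)"
definition "\<mu>g = tf d Ag (1,0)"

abbreviation "P \<equiv> e1 \<delta>"
abbreviation "Q \<equiv> e2 \<delta>"
abbreviation "\<rho> \<equiv> real_of_int \<bar>n\<bar>"

lemma rho_pos: "\<rho> > 0" using nnz by simp
lemma rho1: "\<rho> \<ge> 1" using nnz by linarith
lemma PQ: "P * Q = real_of_int n" using norm_real[of \<delta>] Nd by simp
lemma PQ2: "(P*Q)^2 = \<rho>^2" using PQ by simp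
lemma P2: "P^2 \<ge> 2 * \<rho>^2" using big by simp
lemma P2pos: "P^2 \<ge> 2" using P2 rho1 by (smt (verit) one_le_power)
lemma Q2: "Q^2 = \<rho>^2 / P^2"
proof -
  have "P^2 \<noteq> 0" using P2pos by auto
  moreover have "P^2 * Q^2 = \<rho>^2" using PQ2 by (simp add: power_mult_distrib)
  ultimately show ?thesis by (simp add: eq_divide_eq mult.commute)
qed
lemma Q2le: "Q^2 \<le> 1/2"
proof -
  have "\<rho>^2 / P^2 \<le> \<rho>^2 / (2*\<rho>^2)" using P2 rho_pos
    by (intro divide_left_mono) (auto intro!: mult_pos_pos)
  thus ?thesis using Q2 rho_pos by simp
qed
lemma Q2pos: "Q^2 > 0" unfolding Q2 using rho_pos P2pos by (intro divide_pos_pos) auto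

lemma e1A: "e1 Ag = sd * (1 - Q^2)" and e2A: "e2 Ag = sd * (P^2 - 1)"
proof -
  have "e1 (0,1) = sd" "e2 (0,1) = - sd" unfolding emb1_def emb2_def by simp_all
  thus "e1 Ag = sd * (1 - Q^2)" "e2 Ag = sd * (P^2 - 1)" unfolding Ag_def
    by (simp_all add: power2_eq_square algebra_simps)
qed

lemma inv_rho: "real_of_rat (1 / of_int \<bar>n\<bar>) = 1 / \<rho>"
  by (simp only: of_rat_divide of_rat_1 of_rat_of_int_eq)
lemma e1eps: "e1 \<epsilon>g = P^2 / \<rho>" and e2eps: "e2 \<epsilon>g = Q^2 / \<rho>"
  unfolding \<epsilon>g_def e1_scale e2_scale inv_rho e1_mul e2_mul by (simp_all add: power2_eq_square)

lemma mug: "real_of_rat \<mu>g = sd * (P^2 - Q^2)"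
  unfolding \<mu>g_def tf_real e1A e2A by (simp add: algebra_simps)

lemma epsnorm: "e1 \<epsilon>g * e2 \<epsilon>g = 1"
proof -
  have "e1 \<epsilon>g * e2 \<epsilon>g = (P*Q)^2/\<rho>^2" unfolding e1eps e2eps by (simp add: power_mult_distrib power2_eq_square)
  thus ?thesis using PQ2 rho_pos by simp
qed

lemma epsOK: "\<epsilon>g \<in> OK d"
proof -
  have "real_of_rat (qnorm d \<epsilon>g) = 1"
    unfolding norm_real by (rule epsnorm)
  hence "qnorm d \<epsilon>g = 1" by (metis of_rat_1 of_rat_eq_iff)
  thus ?thesis using trint unfolding OK_def \<epsilon>g_def by simp
qed

lemma eps_unit: "\<epsilon>g \<in> qunits d"
proof -
  have "qmul d \<epsilon>g (qconj \<epsilon>g) = (1,0)" using epsnorm by (simp add: e1_eq_iff)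
  thus ?thesis unfolding qunits_def using epsOK OK_conj by blast
qed

lemma is_frame: "frame d \<delta> \<epsilon>g Ag \<mu>g"
proof (unfold_locales)
  show "\<delta> \<in> OK d" by (rule dOK)
  show "\<epsilon>g \<in> qunits d" by (rule eps_unit)
  show "e1 \<epsilon>g * e2 \<epsilon>g = 1" by (rule epsnorm)
  show "e1 \<epsilon>g > 1"
  proof -
    have "\<rho> * 1 \<le> \<rho> * \<rho>" using mult_left_mono[OF rho1, of \<rho>] rho_pos by simp
    hence "\<rho> < P^2" using P2 rho_pos by (simp add: power2_eq_square)
    thus ?thesis unfolding e1eps using rho_pos by (simp add: less_divide_eq)
  qed
  show "totpos d Ag" unfolding totpos_iff e1A e2A using sd_pos Q2le P2pos by simp
  show "real_of_rat \<mu>g \<le> T Ag x" if "x \<in> OK d - {(0,0)}" for x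
    using Amin0[OF that] unfolding \<mu>g_def Ag_def[symmetric] tf_real[symmetric] of_rat_less_eq .
  show "T Ag (1,0) = real_of_rat \<mu>g" unfolding \<mu>g_def tf_real ..
  show "T Ag \<delta> = real_of_rat \<mu>g" unfolding mug e1A e2A by (simp add: algebra_simps)
  show "\<exists>\<sigma>. (\<sigma> = 1 \<or> \<sigma> = -1) \<and> e1 \<epsilon>g * e2 \<delta> = \<sigma> * e1 \<delta> \<and> e2 \<epsilon>g * e1 \<delta> = \<sigma> * e2 \<delta>"
  proof (intro exI conjI)
    show "sgn (real_of_int n) = 1 \<or> sgn (real_of_int n) = -1" using nnz by (auto simp: sgn_if)
    have s: "real_of_int n / \<rho> = sgn (real_of_int n)" using nnz by (auto simp: sgn_if)
    show "e1 \<epsilon>g * e2 \<delta> = sgn (real_of_int n) * e1 \<delta>"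
      unfolding e1eps s[symmetric] using PQ rho_pos by (simp add: power2_eq_square field_simps)
    show "e2 \<epsilon>g * e1 \<delta> = sgn (real_of_int n) * e2 \<delta>"
      unfolding e2eps s[symmetric] using PQ rho_pos by (simp add: power2_eq_square field_simps)
  qed
  show "e1 Ag < e2 Ag"
  proof -
    have "1 - Q^2 < P^2 - 1" using Q2pos P2pos by linarith
    thus ?thesis unfolding e1A e2A using sd_pos by simp
  qed
  show "e2 Ag < e1 Ag * (e1 \<epsilon>g)^2" unfolding e1A e2A e1eps
    using RA2_aux[OF rho_pos PQ2 P2] sd_pos by (simp add: mult.assoc)
  show "(e1 \<delta>)^2 \<noteq> (e2 \<delta>)^2" using P2pos Q2le by simp
qed

lemma nconj: "T Ag (qconj \<delta>) \<noteq> real_of_rat \<mu>g"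
proof
  assume "T Ag (qconj \<delta>) = real_of_rat \<mu>g"
  hence "sd * ((1 - Q^2) * P^2 + (P^2 - 1) * Q^2) = sd * ((1 - Q^2) * Q^2 + (P^2 - 1) * P^2)"
    unfolding mug e1A e2A by (simp add: algebra_simps)
  hence "(1 - Q^2) * P^2 + (P^2 - 1) * Q^2 = (1 - Q^2) * Q^2 + (P^2 - 1) * P^2" using sd_pos by simp
  hence "(P^2 - Q^2) * (P^2 + Q^2 - 2) = 0" by algebra
  thus False using P2pos Q2pos Q2le by simp
qed

lemma unit_if: "\<bar>n\<bar> = 1 \<Longrightarrow> \<delta> \<in> qunits d"
proof -
  assume n1: "\<bar>n\<bar> = 1"
  define w where "w = qscale (of_int n) (qconj \<delta>)"
  have "w \<in> OK d"
  proof (cases "n = 1")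
    case True thus ?thesis unfolding w_def using OK_conj dOK by (simp add: qscale_def qconj_def)
  next
    case False hence "n = -1" using n1 by auto
    thus ?thesis unfolding w_def using OK_neg[OF OK_conj[OF dOK]] by (simp add: qscale_def qconj_def qneg_def)
  qed
  moreover have "qmul d \<delta> w = (1,0)"
  proof -
    have nn: "n * n = 1" using n1 by (metis abs_mult_self_eq mult_1)
    have "e1 (qmul d \<delta> w) = real_of_int n * (P * Q)" unfolding w_def by simp
    also have "\<dots> = real_of_int (n * n)" unfolding PQ by simp
    also have "\<dots> = 1" using nn by simp
    finally show ?thesis unfolding e1_eq_iff by simp
  qed
  ultimately show ?thesis unfolding qunits_def using dOK by blast
qed

lemma final:
  assumes nur: "\<not> unit_reducible d"
    and N6: "\<bar>n\<bar> \<noteq> 1 \<Longrightarrow> (\<And>x. x \<in> OK d \<Longrightarrow> T Ag x = real_of_rat \<mu>g \<Longrightarrow> (e1 x * e2 x = 1 \<or> e1 x * e2 x = -1) \<Longrightarrow> e1 x = 1 \<or> e1 x = -1)"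
  shows "nK d = 2"
proof -
  interpret fr: frame d \<delta> \<epsilon>g Ag \<mu>g by (rule is_frame)
  have "\<bar>n\<bar> \<noteq> 1" using unit_if fr.unit_red nur by blast
  thus ?thesis using fr.nK_two[OF N6 nconj] by blast
qed

end


lemma core_ge:
  fixes m b t q :: int
  assumes m: "m > 0" and b: "\<bar>b\<bar> \<le> m" and nz: "t \<noteq> 0 \<or> q \<noteq> 0"
  shows "m * t^2 + b * t * q + m * q^2 \<ge> m"
    and "m * t^2 + b * t * q + m * q^2 = m \<Longrightarrow> \<bar>t\<bar> \<le> 1 \<and> \<bar>q\<bar> \<le> 1"
proof -
  define a where "a = \<bar>t\<bar>"
  define c where "c = \<bar>q\<bar>"
  have a0: "a \<ge> 0" and c0: "c \<ge> 0" unfolding a_def c_def by auto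
  have "\<bar>b * t * q\<bar> = \<bar>b\<bar> * (a * c)" unfolding a_def c_def by (simp add: abs_mult)
  also have "\<dots> \<le> m * (a * c)" using b a0 c0 by (intro mult_right_mono) auto
  finally have btq: "b * t * q \<ge> - (m * (a * c))" by linarith
  have sq: "t^2 = a^2" "q^2 = c^2" unfolding a_def c_def by simp_all
  have low: "m * t^2 + b * t * q + m * q^2 \<ge> m * (a^2 + c^2 - a*c)"
    using btq unfolding sq by (simp add: algebra_simps)
  have key: "a^2 + c^2 - a*c \<ge> 1"
  proof (cases "a = 0")
    case True hence "c \<ge> 1" using nz c0 unfolding a_def c_def by auto
    hence "c * c \<ge> 1 * 1" using mult_mono[of 1 c 1 c] by simp
    thus ?thesis using True by (simp add: power2_eq_square)
  next
    case False
    show ?thesis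
    proof (cases "c = 0")
      case True hence "a \<ge> 1" using False a0 by auto
      hence "a * a \<ge> 1 * 1" using mult_mono[of 1 a 1 a] by simp
      thus ?thesis using True by (simp add: power2_eq_square)
    next
      case False2: False
      have "a \<ge> 1" "c \<ge> 1" using False False2 a0 c0 by auto
      hence "a * c \<ge> 1 * 1" using mult_mono[of 1 a 1 c] by simp
      moreover have "(a - c)^2 \<ge> 0" by simp
      ultimately show ?thesis by (simp add: power2_eq_square algebra_simps)
    qed
  qed
  have "m * (a^2 + c^2 - a*c) \<ge> m * 1" using key m by (intro mult_left_mono) auto
  thus "m * t^2 + b * t * q + m * q^2 \<ge> m" using low by simp
  assume eq: "m * t^2 + b * t * q + m * q^2 = m"
  have "m * (a^2 + c^2 - a*c) \<le> m * 1" using low eq by simp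
  hence k1: "a^2 + c^2 - a*c \<le> 1" using m by simp
  have "(a - c)^2 \<ge> 0" by simp
  hence "a^2 + c^2 \<le> 2" using k1 by (simp add: power2_eq_square algebra_simps)
  moreover have "a^2 \<ge> 0" "c^2 \<ge> 0" by simp_all
  ultimately have a2: "a^2 \<le> 2" and c2: "c^2 \<le> 2" by linarith+
  have "a \<le> 1"
  proof (rule ccontr)
    assume "\<not> a \<le> 1" hence "a \<ge> 2" by simp
    hence "a * a \<ge> 2 * 2" using mult_mono[of 2 a 2 a] by simp
    thus False using a2 by (simp add: power2_eq_square)
  qed
  moreover have "c \<le> 1"
  proof (rule ccontr)
    assume "\<not> c \<le> 1" hence "c \<ge> 2" by simp
    hence "c * c \<ge> 2 * 2" using mult_mono[of 2 c 2 c] by simp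
    thus False using c2 by (simp add: power2_eq_square)
  qed
  ultimately have "a \<le> 1" "c \<le> 1" by auto
  thus "\<bar>t\<bar> \<le> 1 \<and> \<bar>q\<bar> \<le> 1" unfolding a_def c_def by simp
qed



lemma sqmod4: "((X::int)^2) mod 4 = (if even X then 0 else 1)"
proof (cases "even X")
  case True then obtain k where "X = 2*k" by (rule evenE)
  thus ?thesis by (simp add: power2_eq_square)
next
  case False then obtain k where k: "X = 2*k+1" by (rule oddE)
  have e: "X^2 = 4*(k*k+k) + 1" unfolding k by (simp add: power2_eq_square algebra_simps)
  have a: "\<forall>a::int. (4*a+1) mod 4 = 1" by presburger
  have "X^2 mod 4 = 1" unfolding e using a by blast
  thus ?thesis using False by simp
qed

lemma ineq_r: fixes m r :: int assumes "-m < r" "r \<le> m" shows "2*r^2 \<le> 2*m^2 + r"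
proof (cases "r \<ge> 0")
  case True
  have "r*r \<le> m*m" using True assms by (intro mult_mono) auto
  thus ?thesis using True by (simp add: power2_eq_square)
next
  case False
  define t where "t = -r"
  have t: "t > 0" "t \<le> m - 1" using False assms unfolding t_def by auto
  have "t*t \<le> (m-1)*(m-1)" using t by (intro mult_mono) auto
  hence "2*t^2 + t \<le> 2*m^2" using t by (simp add: power2_eq_square algebra_simps)
  thus ?thesis unfolding t_def by (simp add: power2_eq_square)
qed

locale c1 = qf +
  fixes m r :: int
  assumes dm: "d = m^2 + r" and m0: "m > 0" and rlo: "-m < r" and rhi: "r \<le> m"
    and rdvd: "r dvd 4*m" and dmod: "d mod 4 = 2 \<or> d mod 4 = 3"
begin

definition "\<delta>1 = (rat_of_int m, 1::rat)"

lemma rnz: "r \<noteq> 0" using rdvd m0 by auto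

lemma OK_c1: assumes "x \<in> OK d" obtains p q :: int where "x = (of_int p, of_int q)"
proof -
  obtain X Y where XY: "fst x = of_int X / 2" "snd x = of_int Y / 2" "4 dvd (X^2 - d*Y^2)"
    using OK_int[OF assms] by blast
  have "(X^2 - d*Y^2) mod 4 = 0" using XY(3) by simp
  hence "((X^2) mod 4 - ((d mod 4) * ((Y^2) mod 4)) mod 4) mod 4 = 0"
    by (metis mod_diff_eq mod_mult_eq mod_mod_trivial)
  hence ev: "even X" "even Y" using dmod unfolding sqmod4 by (auto split: if_splits)
  obtain p where p: "X = 2*p" using ev(1) by (rule evenE)
  obtain q where q: "Y = 2*q" using ev(2) by (rule evenE)
  have "x = (of_int p, of_int q)" using XY(1,2) p q by (simp add: prod_eq_iff)
  thus ?thesis using that by blast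
qed

abbreviation "Ag1 \<equiv> qmul d (0,1) (qadd (1,0) (qneg (qmul d (qconj \<delta>1) (qconj \<delta>1))))"

lemma tf_c1: "tf d Ag1 (of_int p, of_int q) = of_int (4 * d * (m*p^2 + (1 - m^2 - d)*p*q + m*d*q^2))"
  unfolding tf_def qtr_def qmul_def qadd_def qneg_def qconj_def \<delta>1_def
  by (simp add: algebra_simps power2_eq_square)

lemma tf_c1_one: "tf d Ag1 (1,0) = of_int (4 * d * m)"
  using tf_c1[of 1 0] by simp

lemma g_sub: "m*p^2 + (1 - m^2 - d)*p*q + m*d*q^2 = m*(p - m*q)^2 + (-(r-1))*(p - m*q)*q + m*q^2"
  unfolding dm by (simp add: algebra_simps power2_eq_square)

lemma babs: "\<bar>-(r-1)\<bar> \<le> m" using rlo rhi by auto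

lemma Amin_c1: assumes "x \<in> OK d - {(0,0)}" shows "tf d Ag1 (1,0) \<le> tf d Ag1 x"
proof -
  obtain p q where x: "x = (of_int p, of_int q)" using OK_c1 assms by blast
  have "p - m*q \<noteq> 0 \<or> q \<noteq> 0" using assms x by auto
  from core_ge(1)[OF m0 babs this]
  have "m \<le> m*p^2 + (1 - m^2 - d)*p*q + m*d*q^2" unfolding g_sub .
  hence "4*d*m \<le> 4*d*(m*p^2 + (1 - m^2 - d)*p*q + m*d*q^2)" using d1 by simp
  hence "rat_of_int (4*d*m) \<le> of_int (4*d*(m*p^2 + (1 - m^2 - d)*p*q + m*d*q^2))" by (simp only: of_int_le_iff)
  thus ?thesis unfolding x tf_c1 tf_c1_one .
qed

lemma N6_c1:
  assumes r1: "\<bar>r\<bar> \<noteq> 1" and x: "x \<in> OK d" and Tx: "real_of_rat (tf d Ag1 x) = real_of_rat (tf d Ag1 (1,0))"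
    and nx: "e1 x * e2 x = 1 \<or> e1 x * e2 x = -1"
  shows "e1 x = 1 \<or> e1 x = -1"
proof -
  obtain p q where xp: "x = (of_int p, of_int q)" using OK_c1 x by blast
  have "tf d Ag1 x = tf d Ag1 (1,0)" using Tx by simp
  hence "4*d*(m*p^2 + (1 - m^2 - d)*p*q + m*d*q^2) = 4*d*m" unfolding xp tf_c1 tf_c1_one
    by (simp only: of_int_eq_iff)
  hence g: "m*p^2 + (1 - m^2 - d)*p*q + m*d*q^2 = m" using d1 by simp
  have nz: "p - m*q \<noteq> 0 \<or> q \<noteq> 0"
  proof (rule ccontr)
    assume "\<not> ?thesis" hence "p = 0" "q = 0" by auto
    thus False using g m0 by simp
  qed
  have tq: "\<bar>p - m*q\<bar> \<le> 1 \<and> \<bar>q\<bar> \<le> 1" using core_ge(2)[OF m0 babs nz] g unfolding g_sub by simp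
  have "real_of_rat (qnorm d x) = 1 \<or> real_of_rat (qnorm d x) = -1" using nx norm_real by simp
  hence "qnorm d x = 1 \<or> qnorm d x = -1" by (metis of_rat_1 of_rat_minus of_rat_eq_iff)
  moreover have "qnorm d x = of_int (p^2 - d*q^2)" unfolding xp qnorm_def by simp
  ultimately have "rat_of_int (p^2 - d*q^2) = of_int 1 \<or> rat_of_int (p^2 - d*q^2) = of_int (-1)" by simp
  hence N: "p^2 - d*q^2 = 1 \<or> p^2 - d*q^2 = -1" by (simp only: of_int_eq_iff)
  define t where "t = p - m*q"
  have p: "p = t + m*q" unfolding t_def by simp
  have tq': "t \<in> {-1,0,1}" "q \<in> {-1,0,1}" using tq unfolding t_def by auto
  have N': "t^2 + 2*m*t*q + (m^2 - d)*q^2 = 1 \<or> t^2 + 2*m*t*q + (m^2 - d)*q^2 = -1"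
    using N unfolding p by (simp add: power2_eq_square algebra_simps)
  have "q = 0"
  proof (rule ccontr)
    assume q0: "q \<noteq> 0"
    hence "q = 1 \<or> q = -1" using tq' by auto
    thus False using N' tq'(1) dm r1 rnz rlo rhi m0 by (auto simp: power2_eq_square)
  qed
  hence "p^2 = 1 \<or> p^2 = -1" using N by simp
  moreover have "p^2 \<ge> 0" by simp
  ultimately have "p^2 = 1" by linarith
  hence "p = 1 \<or> p = -1" by (simp add: power2_eq_1_iff)
  thus ?thesis unfolding xp \<open>q = 0\<close> emb1_def by auto
qed

end


locale c2 = qf +
  fixes m r :: int
  assumes dm: "d = m^2 + r" and m0: "m > 0" and rlo: "-m < r" and rhi: "r \<le> m"
    and rdvd: "r dvd 4*m" and dmod: "d mod 4 = 1" and modd: "odd m"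
begin

definition "\<delta>2 = (rat_of_int m / 2, 1/2::rat)"

lemma rnz: "r \<noteq> 0" using rdvd m0 by auto

lemma r4: "4 dvd r"
proof -
  have "(m^2) mod 4 = 1" using modd sqmod4 by simp
  hence "(d - m^2) mod 4 = 0" using dmod by (metis mod_diff_eq diff_self mod_0)
  moreover have "d - m^2 = r" using dm by simp
  ultimately have "r mod 4 = 0" by simp
  thus ?thesis by (simp add: dvd_eq_mod_eq_0)
qed

lemma m4: "m \<ge> 4"
proof -
  obtain k where k: "r = 4*k" using r4 by (auto elim: dvdE)
  have "k \<noteq> 0" using rnz k by simp
  hence "\<bar>r\<bar> \<ge> 4" using k by auto
  thus ?thesis using rlo rhi by auto
qed

lemma OK_c2: assumes "x \<in> OK d"
  obtains X Y :: int where "x = (of_int X / 2, of_int Y / 2)" "even (X - Y)"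
proof -
  obtain X Y where XY: "fst x = of_int X / 2" "snd x = of_int Y / 2" "4 dvd (X^2 - d*Y^2)"
    using OK_int[OF assms] by blast
  have "(X^2 - d*Y^2) mod 4 = 0" using XY(3) by simp
  hence "((X^2) mod 4 - ((d mod 4) * ((Y^2) mod 4)) mod 4) mod 4 = 0"
    by (metis mod_diff_eq mod_mult_eq mod_mod_trivial)
  hence "even X \<longleftrightarrow> even Y" using dmod unfolding sqmod4 by (auto split: if_splits)
  hence "even (X - Y)" by auto
  moreover have "x = (of_int X / 2, of_int Y / 2)" using XY(1,2) by (simp add: prod_eq_iff)
  ultimately show ?thesis using that by blast
qed

abbreviation "Ag2 \<equiv> qmul d (0,1) (qadd (1,0) (qneg (qmul d (qconj \<delta>2) (qconj \<delta>2))))"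

lemma tf_c2: "tf d Ag2 (of_int X / 2, of_int Y / 2) = of_int d / 4 * of_int (m*X^2 + (4 - m^2 - d)*X*Y + m*d*Y^2)"
  unfolding tf_def qtr_def qmul_def qadd_def qneg_def qconj_def \<delta>2_def
  by (simp add: field_simps power2_eq_square)

lemma tf_c2_one: "tf d Ag2 (1,0) = of_int d / 4 * of_int (4*m)"
  using tf_c2[of 2 0] by (simp add: power2_eq_square)

lemma g_sub2: "m*(m*Y + 2*z)^2 + (4 - m^2 - d)*(m*Y + 2*z)*Y + m*d*Y^2 = 2 * (2*m*z^2 + (-(r-4))*z*Y + 2*m*Y^2)"
  unfolding dm by (simp add: algebra_simps power2_eq_square)

lemma babs2: "\<bar>-(r-4)\<bar> \<le> 2*m" using rlo rhi m4 by auto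
lemma m20: "2*m > 0" using m0 by simp

lemma split_X: assumes "even (X - Y)" obtains z where "X = m*Y + 2*z"
proof -
  have "even (X - m*Y)" using assms modd by (auto simp: even_diff even_mult_iff)
  then obtain z where "X - m*Y = 2*z" by (rule evenE)
  thus ?thesis using that by (simp add: algebra_simps)
qed

lemma Amin_c2: assumes "x \<in> OK d - {(0,0)}" shows "tf d Ag2 (1,0) \<le> tf d Ag2 x"
proof -
  obtain X Y where x: "x = (of_int X / 2, of_int Y / 2)" "even (X - Y)" using OK_c2 assms by blast
  obtain z where z: "X = m*Y + 2*z" using split_X[OF x(2)] by blast
  have "z \<noteq> 0 \<or> Y \<noteq> 0" using assms x z by auto
  from core_ge(1)[OF m20 babs2 this]
  have "4*m \<le> m*X^2 + (4 - m^2 - d)*X*Y + m*d*Y^2" unfolding z g_sub2 by simp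
  hence le: "rat_of_int (4*m) \<le> of_int (m*X^2 + (4 - m^2 - d)*X*Y + m*d*Y^2)" by (simp only: of_int_le_iff)
  have nn: "rat_of_int d / 4 \<ge> 0" using d1 by simp
  show ?thesis unfolding x tf_c2 tf_c2_one using mult_left_mono[OF le nn] .
qed

lemma N6_c2:
  assumes r1: "\<bar>r\<bar> \<noteq> 4" and x: "x \<in> OK d" and Tx: "real_of_rat (tf d Ag2 x) = real_of_rat (tf d Ag2 (1,0))"
    and nx: "e1 x * e2 x = 1 \<or> e1 x * e2 x = -1"
  shows "e1 x = 1 \<or> e1 x = -1"
proof -
  obtain X Y where xp: "x = (of_int X / 2, of_int Y / 2)" "even (X - Y)" using OK_c2 x by blast
  obtain z where z: "X = m*Y + 2*z" using split_X[OF xp(2)] by blast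
  have "tf d Ag2 x = tf d Ag2 (1,0)" using Tx by simp
  hence "rat_of_int d / 4 * of_int (m*X^2 + (4 - m^2 - d)*X*Y + m*d*Y^2) = of_int d / 4 * of_int (4*m)"
    unfolding xp tf_c2 tf_c2_one .
  moreover have c: "rat_of_int d / 4 \<noteq> 0" using d1 by simp
  ultimately have "rat_of_int (m*X^2 + (4 - m^2 - d)*X*Y + m*d*Y^2) = rat_of_int (4*m)"
    by (metis mult_left_cancel)
  hence "m*X^2 + (4 - m^2 - d)*X*Y + m*d*Y^2 = 4*m" by (simp only: of_int_eq_iff)
  hence g: "2*m*z^2 + (-(r-4))*z*Y + 2*m*Y^2 = 2*m" unfolding z g_sub2 by simp
  have nz: "z \<noteq> 0 \<or> Y \<noteq> 0"
  proof (rule ccontr)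
    assume "\<not> ?thesis" hence "z = 0" "Y = 0" by auto
    thus False using g m0 by simp
  qed
  have tq: "\<bar>z\<bar> \<le> 1 \<and> \<bar>Y\<bar> \<le> 1" using core_ge(2)[OF m20 babs2 nz] g by simp
  have "real_of_rat (qnorm d x) = 1 \<or> real_of_rat (qnorm d x) = -1" using nx norm_real by simp
  hence "qnorm d x = 1 \<or> qnorm d x = -1" by (metis of_rat_1 of_rat_minus of_rat_eq_iff)
  moreover have "qnorm d x = of_int (X^2 - d*Y^2) / 4" unfolding xp qnorm_def by (simp add: power_divide)
  ultimately have "rat_of_int (X^2 - d*Y^2) = of_int 4 \<or> rat_of_int (X^2 - d*Y^2) = of_int (-4)" by auto
  hence N: "X^2 - d*Y^2 = 4 \<or> X^2 - d*Y^2 = -4" by (simp only: of_int_eq_iff)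
  have N': "4*z^2 + 4*m*z*Y - r*Y^2 = 4 \<or> 4*z^2 + 4*m*z*Y - r*Y^2 = -4"
    using N unfolding z dm by (simp add: power2_eq_square algebra_simps)
  have tq': "z \<in> {-1,0,1}" "Y \<in> {-1,0,1}" using tq by auto
  have "Y = 0"
  proof (rule ccontr)
    assume q0: "Y \<noteq> 0"
    hence "Y = 1 \<or> Y = -1" using tq' by auto
    thus False using N' tq'(1) r1 rnz rlo rhi m4 by (auto simp: power2_eq_square)
  qed
  hence "z^2 = 1 \<or> z^2 = -1" using N' by simp
  moreover have "z^2 \<ge> 0" by simp
  ultimately have "z^2 = 1" by linarith
  hence "z = 1 \<or> z = -1" by (simp add: power2_eq_1_iff)
  thus ?thesis unfolding xp \<open>Y = 0\<close> z emb1_def by auto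
qed

end


lemma sq_ge: fixes a s :: real assumes "a \<ge> 0" "s \<ge> 0" shows "(a + s)^2 \<ge> a^2 + s*s"
  using assms by (simp add: power2_eq_square algebra_simps)

theorem theorem2:
  fixes d m r :: int
  assumes "d > 1" and "squarefree d"
    and "d = m^2 + r" and "m > 0" and "-m < r" and "r \<le> m" and "r dvd 4 * m"
    and "d mod 4 = 2 \<or> d mod 4 = 3 \<or> (d mod 4 = 1 \<and> odd m)"
    and "\<not> unit_reducible d"
  shows "nK d = 2"
proof -
  interpret qf d using assms(1,2) by unfold_locales
  have rnz: "r \<noteq> 0" using assms(4,7) by auto
  have ir: "2*r^2 \<le> 2*m^2 + r" using ineq_r assms(5,6) by blast
  have sdd: "sd * sd = real_of_int d" by (rule sd_sq)
  have sd0: "sd \<ge> 0" using sd_pos by simp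
  consider (C1) "d mod 4 = 2 \<or> d mod 4 = 3" | (C2) "d mod 4 = 1" "odd m" using assms(8) by blast
  thus ?thesis
  proof cases
    case C1
    interpret c1 d m r using assms C1 by unfold_locales auto
    have g: "gen d \<delta>1 (-r)"
    proof unfold_locales
      show "\<delta>1 \<in> OK d" unfolding OK_def qtr_def qnorm_def \<delta>1_def by simp
      show "qnorm d \<delta>1 = of_int (-r)" unfolding qnorm_def \<delta>1_def using assms(3) by simp
      show "-r \<noteq> 0" using rnz by simp
      have e: "e1 \<delta>1 = real_of_int m + sd" unfolding emb1_def \<delta>1_def by simp
      have "(real_of_int m + sd)^2 \<ge> (real_of_int m)^2 + sd*sd" by (rule sq_ge) (use assms(4) sd0 in auto)
      moreover have "2 * (real_of_int r)^2 \<le> 2*(real_of_int m)^2 + real_of_int r"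
      proof -
        have "real_of_int (2*r^2) \<le> real_of_int (2*m^2 + r)" using ir by (simp only: of_int_le_iff)
        thus ?thesis by simp
      qed
      moreover have "real_of_int d = (real_of_int m)^2 + real_of_int r" using assms(3) by simp
      ultimately show "(e1 \<delta>1)^2 \<ge> 2 * (real_of_int (-r))^2" unfolding e using sdd by simp
      obtain k where k: "4*m = r*k" using assms(7) by (auto elim: dvdE)
      have kk: "4*m^2 + 2*r = r * (k*m + 2)" using k by (simp add: power2_eq_square algebra_simps)
      have "qtr (qscale (1 / of_int \<bar>-r\<bar>) (qmul d \<delta>1 \<delta>1)) = 2 * (of_int m * of_int m + of_int d) / of_int \<bar>r\<bar>"
        unfolding qtr_def qscale_def qmul_def \<delta>1_def by simp
      also have "2 * (of_int m * of_int m + of_int d) = (of_int (4*m^2 + 2*r) :: rat)"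
        using assms(3) by (simp add: power2_eq_square)
      also have "\<dots> = of_int (r * (k*m+2))" using kk by simp
      finally have "qtr (qscale (1 / of_int \<bar>-r\<bar>) (qmul d \<delta>1 \<delta>1)) = of_int (r * (k*m+2)) / of_int \<bar>r\<bar>" .
      also have "\<dots> = of_int (sgn r * (k*m+2))" using rnz by (simp add: abs_if sgn_if)
      finally show "qtr (qscale (1 / of_int \<bar>-r\<bar>) (qmul d \<delta>1 \<delta>1)) \<in> \<int>" by simp
      show "\<And>x. x \<in> OK d - {(0,0)} \<Longrightarrow> tf d Ag1 (1,0) \<le> tf d Ag1 x" by (rule Amin_c1)
    qed
    interpret gen d \<delta>1 "-r" by (rule g)
    show ?thesis
    proof (rule final[OF assms(9)])
      fix x assume "\<bar>-r\<bar> \<noteq> 1" "x \<in> OK d" "T Ag x = real_of_rat \<mu>g" "e1 x * e2 x = 1 \<or> e1 x * e2 x = -1"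
      thus "e1 x = 1 \<or> e1 x = -1" using N6_c1 unfolding Ag_def \<mu>g_def tf_real[symmetric] by auto
    qed
  next
    case C2
    interpret c2 d m r using assms C2 by unfold_locales auto
    obtain r' where r': "r = 4*r'" using r4 by (auto elim: dvdE)
    have r'nz: "r' \<noteq> 0" using rnz r' by simp
    have N2: "qnorm d \<delta>2 = of_int (-r')"
    proof -
      have "qnorm d \<delta>2 = (of_int m * of_int m - of_int d) / 4" unfolding qnorm_def \<delta>2_def
        by (simp add: power_divide power2_eq_square)
      also have "(of_int m * of_int m - of_int d :: rat) = of_int (-4*r')" using assms(3) r' by (simp add: power2_eq_square)
      finally show ?thesis by simp
    qed
    have g: "gen d \<delta>2 (-r')"
    proof unfold_locales
      show "\<delta>2 \<in> OK d" unfolding OK_def using N2 by (simp add: qtr_def \<delta>2_def)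
      show "qnorm d \<delta>2 = of_int (-r')" by (rule N2)
      show "-r' \<noteq> 0" using r'nz by simp
      have e: "e1 \<delta>2 = (real_of_int m + sd) / 2" unfolding emb1_def \<delta>2_def by (simp add: field_simps of_rat_divide)
      have A: "(real_of_int m + sd)^2 \<ge> (real_of_int m)^2 + sd*sd" by (rule sq_ge) (use assms(4) sd0 in auto)
      have "32*r'^2 \<le> 2*m^2 + 4*r'" using ir r' by (simp add: power2_eq_square)
      moreover have "r'^2 \<ge> 0" by simp
      ultimately have "8*r'^2 \<le> 2*m^2 + 4*r'" by linarith
      hence "real_of_int (8*r'^2) \<le> real_of_int (2*m^2 + 4*r')" by (simp only: of_int_le_iff)
      hence B: "8 * (real_of_int r')^2 \<le> 2*(real_of_int m)^2 + 4 * real_of_int r'" by simp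
      have C: "real_of_int d = (real_of_int m)^2 + 4 * real_of_int r'" using assms(3) r' by simp
      have "(e1 \<delta>2)^2 = (real_of_int m + sd)^2 / 4" unfolding e by (simp add: power_divide)
      also have "\<dots> \<ge> ((real_of_int m)^2 + sd*sd) / 4" using A by (simp add: divide_right_mono)
      finally have "(e1 \<delta>2)^2 \<ge> ((real_of_int m)^2 + real_of_int d) / 4" using sdd by simp
      thus "(e1 \<delta>2)^2 \<ge> 2 * (real_of_int (-r'))^2" using B C by simp
      obtain k where k: "m = r'*k" using assms(7) r' by (auto elim: dvdE)
      have kk: "m^2 + 2*r' = r' * (k*m + 2)" using k by (simp add: power2_eq_square algebra_simps)
      have "qtr (qscale (1 / of_int \<bar>-r'\<bar>) (qmul d \<delta>2 \<delta>2)) = (of_int m * of_int m + of_int d) / 2 / of_int \<bar>r'\<bar>"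
        unfolding qtr_def qscale_def qmul_def \<delta>2_def using r'nz by (simp add: field_simps)
      also have "(of_int m * of_int m + of_int d) / 2 = (of_int (m^2 + 2*r') :: rat)"
        using assms(3) r' by (simp add: power2_eq_square)
      also have "\<dots> = of_int (r' * (k*m+2))" using kk by simp
      finally have "qtr (qscale (1 / of_int \<bar>-r'\<bar>) (qmul d \<delta>2 \<delta>2)) = of_int (r' * (k*m+2)) / of_int \<bar>r'\<bar>" .
      also have "\<dots> = of_int (sgn r' * (k*m+2))" using r'nz by (simp add: abs_if sgn_if)
      finally show "qtr (qscale (1 / of_int \<bar>-r'\<bar>) (qmul d \<delta>2 \<delta>2)) \<in> \<int>" by simp
      show "\<And>x. x \<in> OK d - {(0,0)} \<Longrightarrow> tf d Ag2 (1,0) \<le> tf d Ag2 x" by (rule Amin_c2)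
    qed
    interpret gen d \<delta>2 "-r'" by (rule g)
    show ?thesis
    proof (rule final[OF assms(9)])
      fix x assume h: "\<bar>-r'\<bar> \<noteq> 1" "x \<in> OK d" "T Ag x = real_of_rat \<mu>g" "e1 x * e2 x = 1 \<or> e1 x * e2 x = -1"
      have "\<bar>r\<bar> \<noteq> 4" using h(1) r' by auto
      thus "e1 x = 1 \<or> e1 x = -1" using N6_c2 h unfolding Ag_def \<mu>g_def tf_real[symmetric] by auto
    qed
  qed
qed


end
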